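(* Assume the pair $(\mathcal D,\mathcal F)$ is good. Then for every $\varepsilon\in(0,1/4)$, $$\mathrm{RiskA}(\varepsilon)\le \theta(\varepsilon)\,\mathrm{Risk}_*(\varepsilon),\qquad \theta(\varepsilon)=\frac{2\ln(2/\varepsilon)}{\ln(1/(4\varepsilon))}.$$
   Context: Let $(\Omega,P)$ be a Polish space equipped with a $\sigma$-finite Borel measure $P$, let $\mathcal M\subset\mathbb R^m$, and let $\mathcal D=\{p_\mu\}_{\mu\in\mathcal M}$ be a parametric density family: for each $\mu\in\mathcal M$, $p_\mu$ is a nonnegative Borel function on $\Omega$ with $\int_\Omega p_\mu\,dP=1$. Let $\mathcal F$ be a finite-dimensional linear space of Borel functions on $\Omega$ containing the constants. The pair $(\mathcal D,\mathcal F)$ is called good if: (1) $\mathcal M$ is an open convex subset of $\mathbb R^m$; (2) $p_\mu(\omega)>0$ for all $\mu\in\mathcal M$, $\omega\in\Omega$; (3) for all $\mu,\nu\in\mathcal M$ the function $\omega\mapsto\ln(p_\mu(\omega)/p_\nu(\omega))$ belongs to $\mathcal F$; (4) for every $\phi\in\mathcal F$ the function $\mu\mapsto\ln\int_\Omega e^{\phi(\omega)}p_\mu(\omega)P(d\omega)$ is well defined (finite) and concave on $\mathcal M$. Let $X\subset\mathbb R^n$ be a nonempty convex compact set, $x\mapsto A(x)$ an affine map $\mathbb R^n\to\mathbb R^m$ with $A(X)\subset\mathcal M$, and $g\in\mathbb R^n$. An observation $\omega$ has density $p_{A(x)}$ w.r.t. $P$ for an unknown $x\in X$; the goal is to estimate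 $g^Tx$. An estimate is a Borel function $\hat g:\Omega\to\mathbb R$; it is called affine if $\hat g\in\mathcal F$. For $\varepsilon\in(0,1)$ the $\varepsilon$-risk of $\hat g$ is $\mathrm{Risk}(\hat g;\varepsilon)=\inf\{\delta:\ \sup_{x\in X}\mathrm{Prob}_{\omega\sim p_{A(x)}}\{|\hat g(\omega)-g^Tx|>\delta\}<\varepsilon\}$; $\mathrm{Risk}_*(\varepsilon)=\inf_{\hat g}\mathrm{Risk}(\hat g;\varepsilon)$, the infimum over all Borel estimates; $\mathrm{RiskA}(\varepsilon)=\inf_{\phi\in\mathcal F}\mathrm{Risk}(\phi;\varepsilon)$. *)

theory Defs
  imports "HOL-Analysis.Analysis" "HOL-Probability.Probability"
begin

definition fin_dim_fun_space :: "'a measure \<Rightarrow> ('a \<Rightarrow> real) set \<Rightarrow> bool" where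
  "fin_dim_fun_space P F \<longleftrightarrow>
     (\<exists>k (f :: nat \<Rightarrow> 'a \<Rightarrow> real). F = {(\<lambda>\<omega>. \<Sum>i<k. c i * f i \<omega>) | c. True})
     \<and> (\<forall>\<phi>\<in>F. \<phi> \<in> borel_measurable P)
     \<and> (\<forall>a::real. (\<lambda>\<omega>. a) \<in> F)"

definition density_family :: "'a measure \<Rightarrow> 'm set \<Rightarrow> ('m \<Rightarrow> 'a \<Rightarrow> real) \<Rightarrow> bool" where
  "density_family P M p \<longleftrightarrow>
     (\<forall>\<mu>\<in>M. p \<mu> \<in> borel_measurable P \<and> (\<forall>\<omega>\<in>space P. 0 \<le> p \<mu> \<omega>)
        \<and> (\<integral>\<^sup>+\<omega>. ennreal (p \<mu> \<omega>) \<partial>P) = 1)"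

definition good_pair :: "'a measure \<Rightarrow> ('m::euclidean_space) set \<Rightarrow> ('m \<Rightarrow> 'a \<Rightarrow> real)
    \<Rightarrow> ('a \<Rightarrow> real) set \<Rightarrow> bool" where
  "good_pair P M p F \<longleftrightarrow>
     open M \<and> convex M
     \<and> (\<forall>\<mu>\<in>M. \<forall>\<omega>\<in>space P. 0 < p \<mu> \<omega>)
     \<and> (\<forall>\<mu>\<in>M. \<forall>\<nu>\<in>M. (\<lambda>\<omega>. ln (p \<mu> \<omega> / p \<nu> \<omega>)) \<in> F)
     \<and> (\<forall>\<phi>\<in>F. (\<forall>\<mu>\<in>M. integrable P (\<lambda>\<omega>. exp (\<phi> \<omega>) * p \<mu> \<omega>))
          \<and> concave_on M (\<lambda>\<mu>. ln (\<integral>\<omega>. exp (\<phi> \<omega>) * p \<mu> \<omega> \<partial>P)))"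

definition err_prob :: "'a measure \<Rightarrow> ('m \<Rightarrow> 'a \<Rightarrow> real) \<Rightarrow> ('n \<Rightarrow> 'm)
    \<Rightarrow> ('n::euclidean_space) \<Rightarrow> ('a \<Rightarrow> real) \<Rightarrow> 'n \<Rightarrow> real \<Rightarrow> real" where
  "err_prob P p A g gh x \<delta> =
     measure (density P (\<lambda>\<omega>. ennreal (p (A x) \<omega>))) {\<omega>\<in>space P. \<bar>gh \<omega> - g \<bullet> x\<bar> > \<delta>}"

text \<open>epsilon-risk (infimum over the empty set is +infinity).\<close>
definition risk :: "'a measure \<Rightarrow> ('m \<Rightarrow> 'a \<Rightarrow> real) \<Rightarrow> 'n set \<Rightarrow> ('n \<Rightarrow> 'm)
    \<Rightarrow> ('n::euclidean_space) \<Rightarrow> ('a \<Rightarrow> real) \<Rightarrow> real \<Rightarrow> ereal" where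
  "risk P p X A g gh \<epsilon> =
     Inf {ereal \<delta> | \<delta>. (SUP x\<in>X. err_prob P p A g gh x \<delta>) < \<epsilon>}"

definition risk_star :: "'a measure \<Rightarrow> ('m \<Rightarrow> 'a \<Rightarrow> real) \<Rightarrow> 'n set \<Rightarrow> ('n \<Rightarrow> 'm)
    \<Rightarrow> ('n::euclidean_space) \<Rightarrow> real \<Rightarrow> ereal" where
  "risk_star P p X A g \<epsilon> = (INF gh\<in>borel_measurable P. risk P p X A g gh \<epsilon>)"

definition riskA :: "'a measure \<Rightarrow> ('m \<Rightarrow> 'a \<Rightarrow> real) \<Rightarrow> ('a \<Rightarrow> real) set \<Rightarrow> 'n set
    \<Rightarrow> ('n \<Rightarrow> 'm) \<Rightarrow> ('n::euclidean_space) \<Rightarrow> real \<Rightarrow> ereal" where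
  "riskA P p F X A g \<epsilon> = (INF \<phi>\<in>F. risk P p X A g \<phi> \<epsilon>)"

end

theory Submission
  imports Defs
begin


lemma minimax_aux:
  fixes Z :: "'z::euclidean_space set" and G :: "'k \<Rightarrow> 'z \<Rightarrow> real" and K :: "'k set"
  assumes Z: "compact Z" "convex Z" "Z \<noteq> {}"
    and conc: "\<And>k z1 z2 t. k \<in> K \<Longrightarrow> z1 \<in> Z \<Longrightarrow> z2 \<in> Z \<Longrightarrow> 0 \<le> t \<Longrightarrow> t \<le> 1 \<Longrightarrow>
        (1 - t) * G k z1 + t * G k z2 \<le> G k ((1 - t) *\<^sub>R z1 + t *\<^sub>R z2)"
    and cont: "\<And>k. k \<in> K \<Longrightarrow> continuous_on Z (G k)"
    and mix: "\<And>kk w. (\<And>b. b \<in> (Basis :: ('z \<times> real) set) \<Longrightarrow> kk b \<in> K) \<Longrightarrow>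
        (\<And>b. b \<in> Basis \<Longrightarrow> 0 \<le> w b) \<Longrightarrow> (\<Sum>b\<in>Basis. w b) = 1 \<Longrightarrow>
        \<exists>k\<in>K. \<forall>z\<in>Z. G k z \<le> (\<Sum>b\<in>Basis. w b * G (kk b) z)"
    and cover: "\<And>z. z \<in> Z \<Longrightarrow> \<exists>k\<in>K. G k z < c"
  shows "\<exists>k\<in>K. \<forall>z\<in>Z. G k z \<le> c"
proof -
  define C where "C k = Z \<inter> G k -` {c..}" for k
  have Cclosed: "closed (C k)" if "k \<in> K" for k
    unfolding C_def by (rule continuous_closed_preimage[OF cont[OF that]]) (auto simp: Z compact_imp_closed)
  have Cconv: "convex (C k)" if "k \<in> K" for k
    unfolding convex_def C_def
  proof (intro ballI allI impI)
    fix x y :: 'z and u v :: real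
    assume xy: "x \<in> Z \<inter> G k -` {c..}" "y \<in> Z \<inter> G k -` {c..}" and uv: "0 \<le> u" "0 \<le> v" "u + v = 1"
    have u: "u = 1 - v" using uv by simp
    have "(1 - v) * G k x + v * G k y \<le> G k ((1 - v) *\<^sub>R x + v *\<^sub>R y)"
      using conc[OF that, of x y v] xy uv by auto
    moreover have "(1 - v) * G k x + v * G k y \<ge> (1 - v) * c + v * c"
      using xy uv by (intro add_mono mult_left_mono) auto
    moreover have "u *\<^sub>R x + v *\<^sub>R y \<in> Z" using Z(2) xy uv by (auto simp: convex_def)
    moreover have "(1 - v) * c + v * c = c" by (simp add: algebra_simps)
    ultimately show "u *\<^sub>R x + v *\<^sub>R y \<in> Z \<inter> G k -` {c..}" unfolding u by auto
  qed
  have empty: "Z \<inter> \<Inter>(C ` K) = {}"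
    using cover unfolding C_def by force
  obtain F' where F': "finite F'" "F' \<subseteq> C ` K" "Z \<inter> \<Inter>F' = {}"
    using compact_imp_fip[OF Z(1), of "C ` K"] Cclosed empty by blast
  obtain K0 where K0: "K0 \<subseteq> K" "finite K0" "F' = C ` K0"
    using finite_subset_image[OF F'(1,2)] by blast
  have CZ: "C k \<subseteq> Z" for k unfolding C_def by auto
  have "\<exists>T. T \<subseteq> C ` K0 \<and> card T \<le> DIM('z) + 1 \<and> \<Inter>T = {}"
  proof (cases "card (C ` K0) \<le> DIM('z) + 1")
    case True
    moreover have "K0 \<noteq> {}" using F' K0 Z(3) by auto
    then have "\<Inter>(C ` K0) \<subseteq> Z" using CZ by blast
    ultimately show ?thesis using F' K0 by (intro exI[of _ "C ` K0"]) auto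
  next
    case False
    have "\<not> (\<Inter>(C ` K0) \<noteq> {})"
    proof
      assume "\<Inter>(C ` K0) \<noteq> {}"
      then obtain z where "z \<in> \<Inter>(C ` K0)" by blast
      moreover have "K0 \<noteq> {}" using F' K0 Z(3) by auto
      ultimately have "z \<in> Z \<inter> \<Inter>F'" using CZ K0 by blast
      then show False using F' by auto
    qed
    then obtain T where "T \<subseteq> C ` K0" "card T = DIM('z) + 1" "\<Inter>T = {}"
      using Helly[of "C ` K0"] False Cconv K0 by force
    then show ?thesis by (intro exI[of _ T]) auto
  qed
  then obtain T where T: "T \<subseteq> C ` K0" "card T \<le> DIM('z) + 1" "\<Inter>T = {}" by blast
  obtain K1 where K1: "K1 \<subseteq> K0" "inj_on C K1" "T = C ` K1"
    using T(1) subset_image_inj by metis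
  have fK1: "finite K1" using K1 K0 finite_subset by blast
  have cK1: "card K1 \<le> DIM('z \<times> real)"
    using T(2) K1 card_image by (fastforce simp: DIM_prod)
  have K1ne: "K1 \<noteq> {}" using T K1 Z(3) by auto
  have cov1: "\<exists>k\<in>K1. G k z < c" if "z \<in> Z" for z
  proof (rule ccontr)
    assume "\<not> ?thesis"
    then have "z \<in> \<Inter>T" using that K1 by (auto simp: C_def)
    then show False using T by auto
  qed
  obtain h where h: "h ` K1 \<subseteq> (Basis :: ('z \<times> real) set)" "inj_on h K1"
    using card_le_inj[OF fK1 finite_Basis cK1] by blast
  obtain k0 where k0: "k0 \<in> K1" using K1ne by blast
  define kk where "kk b = (if b \<in> h ` K1 then inv_into K1 h b else k0)" for b
  have kkK1: "kk b \<in> K1" for b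
    unfolding kk_def using k0 by (auto simp: inv_into_into)
  have K1kk: "k \<in> kk ` Basis" if "k \<in> K1" for k
  proof -
    have "kk (h k) = k" unfolding kk_def using that h by auto
    then show ?thesis using h that by force
  qed
  have kkK: "kk b \<in> K" for b using kkK1 K1 K0 by blast
  define U where "U = {u :: 'z \<times> real. \<exists>z\<in>Z. \<forall>b\<in>Basis. u \<bullet> b \<le> G (kk b) z}"
  define q :: "'z \<times> real" where "q = (\<Sum>b\<in>Basis. c *\<^sub>R b)"
  have qb: "q \<bullet> b = c" if "b \<in> Basis" for b
    unfolding q_def using that by (simp add: inner_sum_left inner_Basis if_distrib cong: if_cong)
  define vec where "vec z = (\<Sum>b\<in>Basis. G (kk b) z *\<^sub>R b)" for z
  have vecb: "vec z \<bullet> b = G (kk b) z" if "b \<in> Basis" for b z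
    unfolding vec_def using that by (simp add: inner_sum_left inner_Basis if_distrib cong: if_cong)
  have convU: "convex U"
    unfolding convex_def U_def
  proof (intro ballI allI impI, safe)
    fix x y :: "'z \<times> real" and u v :: real and z1 z2
    assume uv: "0 \<le> u" "0 \<le> v" "u + v = 1" and z1: "z1 \<in> Z" "\<forall>b\<in>Basis. x \<bullet> b \<le> G (kk b) z1"
      and z2: "z2 \<in> Z" "\<forall>b\<in>Basis. y \<bullet> b \<le> G (kk b) z2"
    have u: "u = 1 - v" using uv by simp
    show "\<exists>z\<in>Z. \<forall>b\<in>Basis. (u *\<^sub>R x + v *\<^sub>R y) \<bullet> b \<le> G (kk b) z"
    proof (intro bexI[of _ "(1 - v) *\<^sub>R z1 + v *\<^sub>R z2"] ballI)
      fix b :: "'z \<times> real" assume b: "b \<in> Basis"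
      have "(u *\<^sub>R x + v *\<^sub>R y) \<bullet> b = (1 - v) * (x \<bullet> b) + v * (y \<bullet> b)"
        by (simp add: u inner_add_left)
      also have "\<dots> \<le> (1 - v) * G (kk b) z1 + v * G (kk b) z2"
        using z1 z2 b uv by (intro add_mono mult_left_mono) auto
      also have "\<dots> \<le> G (kk b) ((1 - v) *\<^sub>R z1 + v *\<^sub>R z2)"
        using conc[OF kkK z1(1) z2(1), of v] uv by auto
      finally show "(u *\<^sub>R x + v *\<^sub>R y) \<bullet> b \<le> G (kk b) ((1 - v) *\<^sub>R z1 + v *\<^sub>R z2)" .
    next
      show "(1 - v) *\<^sub>R z1 + v *\<^sub>R z2 \<in> Z" using Z(2) z1 z2 uv by (auto simp: convex_def)
    qed
  qed
  have qU: "q \<notin> U"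
  proof
    assume "q \<in> U"
    then obtain z where z: "z \<in> Z" "\<forall>b\<in>Basis. c \<le> G (kk b) z" unfolding U_def using qb by auto
    obtain k where k: "k \<in> K1" "G k z < c" using cov1[OF z(1)] by blast
    obtain b where "b \<in> Basis" "k = kk b" using K1kk[OF k(1)] by blast
    then show False using z k by auto
  qed
  have "convex ((\<lambda>u. u - q) ` U)" using convU by (simp add: convex_translation_subtract_eq)
  moreover have "0 \<notin> (\<lambda>u. u - q) ` U" using qU by auto
  ultimately obtain a where a: "a \<noteq> 0" "\<forall>x\<in>(\<lambda>u. u - q) ` U. 0 \<le> a \<bullet> x"
    using separating_hyperplane_set_0 by blast
  define l where "l = - a"
  have lU: "l \<bullet> u \<le> l \<bullet> q" if "u \<in> U" for u
    using a(2) that unfolding l_def by (auto simp: inner_diff_right)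
  obtain z0 where z0: "z0 \<in> Z" using Z(3) by blast
  have vecU: "vec z \<in> U" if "z \<in> Z" for z unfolding U_def using that vecb by auto
  have lpos: "0 \<le> l \<bullet> b" if b: "b \<in> Basis" for b
  proof (rule ccontr)
    assume neg: "\<not> 0 \<le> l \<bullet> b"
    define s where "s = (l \<bullet> q - l \<bullet> vec z0 + 1) / (- (l \<bullet> b))"
    have s0: "0 \<le> s" and sl: "s * (- (l \<bullet> b)) = l \<bullet> q - l \<bullet> vec z0 + 1"
      using neg lU[OF vecU[OF z0]] unfolding s_def by (auto simp: field_simps)
    have "vec z0 - s *\<^sub>R b \<in> U"
      unfolding U_def
    proof (intro CollectI bexI[OF _ z0] ballI)
      fix b' :: "'z \<times> real" assume "b' \<in> Basis"
      then show "(vec z0 - s *\<^sub>R b) \<bullet> b' \<le> G (kk b') z0"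
        using vecb s0 b by (auto simp: inner_diff_left inner_Basis)
    qed
    from lU[OF this] have "l \<bullet> vec z0 - s * (l \<bullet> b) \<le> l \<bullet> q" by (simp add: inner_diff_right)
    then show False using sl by (simp add: algebra_simps)
  qed
  define S where "S = (\<Sum>b\<in>Basis. l \<bullet> b)"
  have "S \<noteq> 0"
  proof
    assume "S = 0"
    then have "\<forall>b\<in>Basis. l \<bullet> b = 0"
      unfolding S_def using sum_nonneg_eq_0_iff[OF finite_Basis, of "\<lambda>b. l \<bullet> b"] lpos by blast
    then have "l = 0" by (simp add: euclidean_all_zero_iff)
    then show False using a(1) unfolding l_def by simp
  qed
  then have S0: "0 < S" unfolding S_def using lpos by (metis order_le_neq_trans sum_nonneg)
  define w where "w b = (l \<bullet> b) / S" for b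
  have w0: "0 \<le> w b" if "b \<in> Basis" for b using lpos[OF that] S0 unfolding w_def by auto
  have w1: "(\<Sum>b\<in>Basis. w b) = 1" unfolding w_def using S0
    by (simp add: sum_divide_distrib[symmetric] S_def)
  obtain k where k: "k \<in> K" "\<forall>z\<in>Z. G k z \<le> (\<Sum>b\<in>Basis. w b * G (kk b) z)"
    using mix[of kk w, OF kkK w0 w1] by blast
  have "(\<Sum>b\<in>Basis. w b * G (kk b) z) \<le> c" if z: "z \<in> Z" for z
  proof -
    have "l \<bullet> vec z = (\<Sum>b\<in>Basis. (l \<bullet> b) * G (kk b) z)"
      by (subst euclidean_inner) (simp add: vecb)
    moreover have "l \<bullet> q = (\<Sum>b\<in>Basis. (l \<bullet> b) * c)"
      by (subst euclidean_inner) (simp add: qb)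
    ultimately have "(\<Sum>b\<in>Basis. (l \<bullet> b) * G (kk b) z) \<le> S * c"
      using lU[OF vecU[OF z]] by (simp add: S_def sum_distrib_right)
    then have "(\<Sum>b\<in>Basis. (l \<bullet> b) * G (kk b) z) / S \<le> c" using S0 by (simp add: divide_le_eq mult.commute)
    then show ?thesis unfolding w_def by (simp add: sum_divide_distrib[symmetric])
  qed
  then show ?thesis using k by force
qed



locale setting =
  fixes P :: "'a::polish_space measure" and M :: "'m::euclidean_space set"
    and p :: "'m \<Rightarrow> 'a \<Rightarrow> real" and F :: "('a \<Rightarrow> real) set"
  assumes sP: "sets P = sets borel" and dens: "density_family P M p"
    and fd: "fin_dim_fun_space P F" and good: "good_pair P M p F"
begin

lemma spaceP[simp]: "space P = UNIV"
  using sets_eq_imp_space_eq[OF sP] by simp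

lemma F_lin:
  assumes "\<phi> \<in> F" "\<psi> \<in> F" shows "(\<lambda>\<omega>. a * \<phi> \<omega> + b * \<psi> \<omega>) \<in> F"
proof -
  have "\<exists>k (f :: nat \<Rightarrow> 'a \<Rightarrow> real). F = {(\<lambda>\<omega>. \<Sum>i<k. c i * f i \<omega>) | c. True}"
    using fd unfolding fin_dim_fun_space_def by (elim conjE)
  then obtain k and f :: "nat \<Rightarrow> 'a \<Rightarrow> real" where F: "F = {(\<lambda>\<omega>. \<Sum>i<k. c i * f i \<omega>) | c. True}"
    by (elim exE)
  obtain c1 where c1: "\<phi> = (\<lambda>\<omega>. \<Sum>i<k. c1 i * f i \<omega>)" using assms(1) F by blast
  obtain c2 where c2: "\<psi> = (\<lambda>\<omega>. \<Sum>i<k. c2 i * f i \<omega>)" using assms(2) F by blast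
  have "(\<lambda>\<omega>. a * \<phi> \<omega> + b * \<psi> \<omega>) = (\<lambda>\<omega>. \<Sum>i<k. (a * c1 i + b * c2 i) * f i \<omega>)"
    unfolding c1 c2 by (auto simp: sum_distrib_left sum.distrib algebra_simps)
  then show ?thesis unfolding F by (simp only: mem_Collect_eq) (rule exI[of _ "\<lambda>i. a * c1 i + b * c2 i"], simp)
qed

lemma F_const: "(\<lambda>\<omega>. a) \<in> F"
  using fd unfolding fin_dim_fun_space_def by blast

lemma F_meas: "\<phi> \<in> F \<Longrightarrow> \<phi> \<in> borel_measurable P"
  using fd unfolding fin_dim_fun_space_def by blast

lemma F_scale: "\<phi> \<in> F \<Longrightarrow> (\<lambda>\<omega>. a * \<phi> \<omega>) \<in> F"
  using F_lin[of \<phi> \<phi> a 0] by simp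

lemma F_add_const: "\<phi> \<in> F \<Longrightarrow> (\<lambda>\<omega>. \<phi> \<omega> + a) \<in> F"
  using F_lin[of \<phi> "\<lambda>_. a" 1 1] F_const by simp

lemma F_sum:
  assumes "finite S" "\<And>i. i \<in> S \<Longrightarrow> \<phi> i \<in> F"
  shows "(\<lambda>\<omega>. \<Sum>i\<in>S. w i * \<phi> i \<omega>) \<in> F"
  using assms
proof (induction S rule: finite_induct)
  case empty then show ?case using F_const[of 0] by simp
next
  case (insert x S)
  have "(\<lambda>\<omega>. 1 * (\<Sum>i\<in>S. w i * \<phi> i \<omega>) + w x * \<phi> x \<omega>) \<in> F"
    using insert by (intro F_lin) auto
  then show ?case using insert by (simp add: add.commute)
qed

lemma p_pos: "\<mu> \<in> M \<Longrightarrow> 0 < p \<mu> \<omega>"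
  using good unfolding good_pair_def by auto

lemma p_meas: "\<mu> \<in> M \<Longrightarrow> p \<mu> \<in> borel_measurable P"
  using dens unfolding density_family_def by auto

lemma int_F: "\<phi> \<in> F \<Longrightarrow> \<mu> \<in> M \<Longrightarrow> integrable P (\<lambda>\<omega>. exp (\<phi> \<omega>) * p \<mu> \<omega>)"
  using good unfolding good_pair_def by auto

lemma conc_F: "\<phi> \<in> F \<Longrightarrow> concave_on M (\<lambda>\<mu>. ln (\<integral>\<omega>. exp (\<phi> \<omega>) * p \<mu> \<omega> \<partial>P))"
  using good unfolding good_pair_def by auto

lemma lnratio_F: "\<mu> \<in> M \<Longrightarrow> \<nu> \<in> M \<Longrightarrow> (\<lambda>\<omega>. ln (p \<mu> \<omega> / p \<nu> \<omega>)) \<in> F"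
  using good unfolding good_pair_def by auto

lemma M_open: "open M" and M_convex: "convex M"
  using good unfolding good_pair_def by auto

lemma p_int: "\<mu> \<in> M \<Longrightarrow> integrable P (p \<mu>)"
  using int_F[OF F_const[of 0]] by simp

lemma p_one: "\<mu> \<in> M \<Longrightarrow> (\<integral>\<omega>. p \<mu> \<omega> \<partial>P) = 1"
proof -
  assume m: "\<mu> \<in> M"
  have "(\<integral>\<omega>. p \<mu> \<omega> \<partial>P) = enn2real (\<integral>\<^sup>+\<omega>. ennreal (p \<mu> \<omega>) \<partial>P)"
    using p_meas[OF m] p_pos[OF m] by (intro integral_eq_nn_integral) (auto intro: less_imp_le)
  also have "\<dots> = 1" using dens m unfolding density_family_def by auto
  finally show ?thesis .
qed

definition I :: "'m \<Rightarrow> ('a \<Rightarrow> real) \<Rightarrow> real" where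
  "I \<mu> \<phi> = (\<integral>\<omega>. exp (\<phi> \<omega>) * p \<mu> \<omega> \<partial>P)"

definition \<Lambda> :: "'m \<Rightarrow> ('a \<Rightarrow> real) \<Rightarrow> real" where
  "\<Lambda> \<mu> \<phi> = ln (I \<mu> \<phi>)"

lemma I_pos: assumes "\<phi> \<in> F" "\<mu> \<in> M" shows "0 < I \<mu> \<phi>"
proof -
  have pt: "\<And>\<omega>. 0 \<le> exp (\<phi> \<omega>) * p \<mu> \<omega>" using p_pos[OF assms(2)] by (simp add: less_imp_le)
  have nn: "0 \<le> I \<mu> \<phi>" unfolding I_def
    by (intro integral_nonneg_AE AE_I2 pt)
  have "I \<mu> \<phi> \<noteq> 0"
  proof
    assume "I \<mu> \<phi> = 0"
    then have "AE \<omega> in P. exp (\<phi> \<omega>) * p \<mu> \<omega> = 0"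
      unfolding I_def using int_F[OF assms] pt
      by (subst (asm) integral_nonneg_eq_0_iff_AE) (auto intro!: AE_I2)
    moreover have "AE \<omega> in P. exp (\<phi> \<omega>) * p \<mu> \<omega> \<noteq> 0"
      using p_pos[OF assms(2)] by (intro AE_I2) (metis exp_gt_zero mult_pos_pos less_irrefl)
    ultimately have "AE \<omega> in P. False" by eventually_elim auto
    then have "(\<integral>\<omega>. p \<mu> \<omega> \<partial>P) = (\<integral>\<omega>. 0 \<partial>P)" using p_meas[OF assms(2)] by (intro integral_cong_AE) (auto intro: AE_mp)
    then show False using p_one[OF assms(2)] by simp
  qed
  then show ?thesis using nn by simp
qed

lemma I_const: "\<phi> \<in> F \<Longrightarrow> \<mu> \<in> M \<Longrightarrow> I \<mu> (\<lambda>\<omega>. \<phi> \<omega> + a) = exp a * I \<mu> \<phi>"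
  unfolding I_def by (simp add: exp_add algebra_simps)

lemma I_zero: "\<mu> \<in> M \<Longrightarrow> I \<mu> (\<lambda>_. 0) = 1"
  unfolding I_def using p_one by simp

end

context setting begin

lemma Lambda_jensen:
  assumes B: "finite B" and w: "\<And>b. b \<in> B \<Longrightarrow> 0 \<le> w b" "(\<Sum>b\<in>B. w b) = 1"
    and phi: "\<And>b. b \<in> B \<Longrightarrow> \<phi> b \<in> F" and mu: "\<mu> \<in> M"
  shows "\<Lambda> \<mu> (\<lambda>\<omega>. \<Sum>b\<in>B. w b * \<phi> b \<omega>) \<le> (\<Sum>b\<in>B. w b * \<Lambda> \<mu> (\<phi> b))"
proof -
  define L where "L b = \<Lambda> \<mu> (\<phi> b)" for b
  define S where "S = (\<Sum>b\<in>B. w b * L b)"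
  have Bne: "B \<noteq> {}" using w(2) by auto
  have Ipos: "0 < I \<mu> (\<phi> b)" if "b \<in> B" for b using I_pos[OF phi[OF that] mu] .
  have pw: "exp (\<Sum>b\<in>B. w b * \<phi> b \<omega>) * p \<mu> \<omega> \<le>
      exp S * (\<Sum>b\<in>B. (w b / I \<mu> (\<phi> b)) * (exp (\<phi> b \<omega>) * p \<mu> \<omega>))" for \<omega>
  proof -
    have "(\<Sum>b\<in>B. w b * \<phi> b \<omega>) = (\<Sum>b\<in>B. w b * (\<phi> b \<omega> - L b)) + S"
      unfolding S_def by (simp add: sum.distrib[symmetric] algebra_simps)
    then have "exp (\<Sum>b\<in>B. w b * \<phi> b \<omega>) = exp (\<Sum>b\<in>B. w b * (\<phi> b \<omega> - L b)) * exp S"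
      by (simp add: exp_add)
    also have "exp (\<Sum>b\<in>B. w b * (\<phi> b \<omega> - L b)) \<le> (\<Sum>b\<in>B. w b * exp (\<phi> b \<omega> - L b))"
      using convex_on_sum[OF B Bne exp_convex w(2), of "\<lambda>b. \<phi> b \<omega> - L b"] w(1) by simp
    finally have "exp (\<Sum>b\<in>B. w b * \<phi> b \<omega>) \<le> (\<Sum>b\<in>B. w b * exp (\<phi> b \<omega> - L b)) * exp S"
      by (simp add: mult_right_mono)
    moreover have "exp (\<phi> b \<omega> - L b) = exp (\<phi> b \<omega>) / I \<mu> (\<phi> b)" if "b \<in> B" for b
      unfolding L_def \<Lambda>_def using Ipos[OF that] by (simp add: exp_diff)
    ultimately have "exp (\<Sum>b\<in>B. w b * \<phi> b \<omega>) \<le> exp S * (\<Sum>b\<in>B. (w b / I \<mu> (\<phi> b)) * exp (\<phi> b \<omega>))"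
      by (simp add: mult.commute)
    then have "exp (\<Sum>b\<in>B. w b * \<phi> b \<omega>) * p \<mu> \<omega> \<le> exp S * (\<Sum>b\<in>B. (w b / I \<mu> (\<phi> b)) * exp (\<phi> b \<omega>)) * p \<mu> \<omega>"
      using p_pos[OF mu, of \<omega>] by (simp add: mult_right_mono)
    moreover have "(\<Sum>b\<in>B. (w b / I \<mu> (\<phi> b)) * exp (\<phi> b \<omega>)) * p \<mu> \<omega> =
       (\<Sum>b\<in>B. (w b / I \<mu> (\<phi> b)) * (exp (\<phi> b \<omega>) * p \<mu> \<omega>))"
      by (simp add: sum_distrib_right mult.assoc)
    ultimately show ?thesis by (simp add: mult.assoc)
  qed
  have "I \<mu> (\<lambda>\<omega>. \<Sum>b\<in>B. w b * \<phi> b \<omega>) \<le>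
      (\<integral>\<omega>. exp S * (\<Sum>b\<in>B. (w b / I \<mu> (\<phi> b)) * (exp (\<phi> b \<omega>) * p \<mu> \<omega>)) \<partial>P)"
    unfolding I_def[of \<mu> "\<lambda>\<omega>. \<Sum>b\<in>B. w b * \<phi> b \<omega>"] using pw int_F[OF F_sum[where \<phi>=\<phi> and w=w, OF B phi] mu] int_F[OF phi mu]
    by (intro integral_mono) (auto intro!: integrable_sum integrable_mult_right)
  also have "\<dots> = exp S * (\<Sum>b\<in>B. (w b / I \<mu> (\<phi> b)) * I \<mu> (\<phi> b))"
    unfolding I_def using int_F[OF phi mu]
    by (simp add: integral_sum integrable_mult_right)
  also have "(\<Sum>b\<in>B. (w b / I \<mu> (\<phi> b)) * I \<mu> (\<phi> b)) = (\<Sum>b\<in>B. w b)"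
    using Ipos by (intro sum.cong) (auto simp: less_imp_neq[symmetric])
  also have "exp S * (\<Sum>b\<in>B. w b) = exp S" using w(2) by simp
  finally have "I \<mu> (\<lambda>\<omega>. \<Sum>b\<in>B. w b * \<phi> b \<omega>) \<le> exp S" .
  then have "\<Lambda> \<mu> (\<lambda>\<omega>. \<Sum>b\<in>B. w b * \<phi> b \<omega>) \<le> ln (exp S)"
    unfolding \<Lambda>_def using I_pos[OF F_sum[where \<phi>=\<phi> and w=w, OF B phi] mu] by (subst ln_le_cancel_iff) auto
  then show ?thesis unfolding S_def L_def by simp
qed

definition aff :: "'m \<Rightarrow> 'm \<Rightarrow> real" where
  "aff \<mu> \<nu> = (\<integral>\<omega>. sqrt (p \<mu> \<omega> * p \<nu> \<omega>) \<partial>P)"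

definition psiA :: "'m \<Rightarrow> 'm \<Rightarrow> 'a \<Rightarrow> real" where
  "psiA \<mu> \<nu> = (\<lambda>\<omega>. (1/2) * ln (p \<nu> \<omega> / p \<mu> \<omega>))"

lemma psiA_F: "\<mu> \<in> M \<Longrightarrow> \<nu> \<in> M \<Longrightarrow> psiA \<mu> \<nu> \<in> F"
  unfolding psiA_def by (intro F_scale lnratio_F)

lemma psiA_neg_F: "\<mu> \<in> M \<Longrightarrow> \<nu> \<in> M \<Longrightarrow> (\<lambda>\<omega>. - psiA \<mu> \<nu> \<omega>) \<in> F"
  using F_scale[OF psiA_F, of \<mu> \<nu> "-1"] by simp

lemma sqrt_aux: "0 < a \<Longrightarrow> 0 < b \<Longrightarrow> exp (ln (b / a) / 2) * a = sqrt (a * b)"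
proof -
  assume ab: "0 < a" "0 < b"
  have "exp (ln (b / a) / 2) = (b / a) powr (1/2)"
    using ab by (simp add: powr_def)
  also have "\<dots> = sqrt (b / a)"
    using ab by (simp add: powr_half_sqrt)
  also have "sqrt (b / a) * a = sqrt (a * b)"
  proof -
    have "sqrt (b / a) * a = sqrt b / sqrt a * (sqrt a * sqrt a)" using ab by (simp add: real_sqrt_divide)
    also have "\<dots> = sqrt a * sqrt b" using ab by (simp add: field_simps)
    finally show ?thesis by (simp add: real_sqrt_mult)
  qed
  finally show ?thesis .
qed

lemma aff_pt1: "\<mu> \<in> M \<Longrightarrow> \<nu> \<in> M \<Longrightarrow> exp (psiA \<mu> \<nu> \<omega>) * p \<mu> \<omega> = sqrt (p \<mu> \<omega> * p \<nu> \<omega>)"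
  unfolding psiA_def using p_pos by (simp add: sqrt_aux)

lemma aff_pt2: "\<mu> \<in> M \<Longrightarrow> \<nu> \<in> M \<Longrightarrow> exp (- psiA \<mu> \<nu> \<omega>) * p \<nu> \<omega> = sqrt (p \<mu> \<omega> * p \<nu> \<omega>)"
proof -
  assume m: "\<mu> \<in> M" "\<nu> \<in> M"
  have "- psiA \<mu> \<nu> \<omega> = ln (p \<mu> \<omega> / p \<nu> \<omega>) / 2"
    unfolding psiA_def using p_pos[OF m(1)] p_pos[OF m(2)] by (simp add: ln_div)
  then have "exp (- psiA \<mu> \<nu> \<omega>) * p \<nu> \<omega> = exp (ln (p \<mu> \<omega> / p \<nu> \<omega>) / 2) * p \<nu> \<omega>"
    by (simp only:)
  also have "\<dots> = sqrt (p \<nu> \<omega> * p \<mu> \<omega>)" using p_pos m by (intro sqrt_aux) auto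
  finally show ?thesis by (simp add: mult.commute)
qed

lemma aff_I1: "\<mu> \<in> M \<Longrightarrow> \<nu> \<in> M \<Longrightarrow> I \<mu> (psiA \<mu> \<nu>) = aff \<mu> \<nu>"
  unfolding I_def aff_def by (simp add: aff_pt1)

lemma aff_I2: "\<mu> \<in> M \<Longrightarrow> \<nu> \<in> M \<Longrightarrow> I \<nu> (\<lambda>\<omega>. - psiA \<mu> \<nu> \<omega>) = aff \<mu> \<nu>"
  unfolding I_def aff_def by (simp add: aff_pt2)

lemma aff_int: "\<mu> \<in> M \<Longrightarrow> \<nu> \<in> M \<Longrightarrow> integrable P (\<lambda>\<omega>. sqrt (p \<mu> \<omega> * p \<nu> \<omega>))"
proof -
  assume m: "\<mu> \<in> M" "\<nu> \<in> M"
  have "integrable P (\<lambda>\<omega>. exp (psiA \<mu> \<nu> \<omega>) * p \<mu> \<omega>)" by (rule int_F[OF psiA_F[OF m] m(1)])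
  then show ?thesis by (simp add: aff_pt1[OF m])
qed

lemma aff_pos: "\<mu> \<in> M \<Longrightarrow> \<nu> \<in> M \<Longrightarrow> 0 < aff \<mu> \<nu>"
  using I_pos[OF psiA_F] aff_I1 by metis

lemma aff_self: "\<mu> \<in> M \<Longrightarrow> aff \<mu> \<mu> = 1"
  unfolding aff_def using p_one p_pos by (simp add: less_imp_le)

lemma hellinger:
  assumes "\<psi> \<in> F" "\<mu> \<in> M" "\<nu> \<in> M"
  shows "2 * ln (aff \<mu> \<nu>) \<le> \<Lambda> \<mu> \<psi> + \<Lambda> \<nu> (\<lambda>\<omega>. - \<psi> \<omega>)"
proof -
  have npsi: "(\<lambda>\<omega>. - \<psi> \<omega>) \<in> F" using F_scale[OF assms(1), of "-1"] by simp
  define I1 where "I1 = I \<mu> \<psi>"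
  define I2 where "I2 = I \<nu> (\<lambda>\<omega>. - \<psi> \<omega>)"
  have I1: "0 < I1" unfolding I1_def using I_pos assms by blast
  have I2: "0 < I2" unfolding I2_def using I_pos assms npsi by blast
  define s where "s = sqrt (I2 / I1)"
  have s: "0 < s" unfolding s_def using I1 I2 by simp
  have pw: "sqrt (p \<mu> \<omega> * p \<nu> \<omega>) \<le> (s * (exp (\<psi> \<omega>) * p \<mu> \<omega>) + (1 / s) * (exp (- \<psi> \<omega>) * p \<nu> \<omega>)) / 2" for \<omega>
  proof -
    have "sqrt (p \<mu> \<omega> * p \<nu> \<omega>) = sqrt ((s * (exp (\<psi> \<omega>) * p \<mu> \<omega>)) * ((1 / s) * (exp (- \<psi> \<omega>) * p \<nu> \<omega>)))"
      using s by (simp add: exp_minus field_simps)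
    also have "\<dots> \<le> (s * (exp (\<psi> \<omega>) * p \<mu> \<omega>) + (1 / s) * (exp (- \<psi> \<omega>) * p \<nu> \<omega>)) / 2"
      using s p_pos assms by (intro arith_geo_mean_sqrt) (auto intro!: mult_nonneg_nonneg less_imp_le)
    finally show ?thesis .
  qed
  have "aff \<mu> \<nu> \<le> (\<integral>\<omega>. (s * (exp (\<psi> \<omega>) * p \<mu> \<omega>) + (1 / s) * (exp (- \<psi> \<omega>) * p \<nu> \<omega>)) / 2 \<partial>P)"
    unfolding aff_def using pw int_F[OF assms(1,2)] int_F[OF npsi assms(3)] aff_int[OF assms(2,3)]
    by (intro integral_mono) auto
  also have "\<dots> = (s * I1 + (1 / s) * I2) / 2"
    unfolding I1_def I2_def I_def using int_F[OF assms(1,2)] int_F[OF npsi assms(3)] by simp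
  also have "\<dots> = sqrt (I1 * I2)"
    unfolding s_def using I1 I2
    by (simp add: real_sqrt_divide field_simps real_sqrt_mult)
  finally have a: "aff \<mu> \<nu> \<le> sqrt (I1 * I2)" .
  have "2 * ln (aff \<mu> \<nu>) = ln (aff \<mu> \<nu> ^ 2)" using aff_pos assms by (simp add: ln_realpow)
  also have "\<dots> \<le> ln (sqrt (I1 * I2) ^ 2)"
    using a aff_pos[OF assms(2,3)] by (subst ln_le_cancel_iff) (auto intro: power_mono)
  also have "\<dots> = ln I1 + ln I2" using I1 I2 by (simp add: ln_mult)
  finally show ?thesis unfolding I1_def I2_def \<Lambda>_def .
qed

end

context setting begin

lemma Lambda_concave: "\<phi> \<in> F \<Longrightarrow> concave_on M (\<lambda>\<mu>. \<Lambda> \<mu> \<phi>)"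
  unfolding \<Lambda>_def I_def by (rule conc_F)

lemma lnaff_concave: "concave_on (M \<times> M) (\<lambda>z. ln (aff (fst z) (snd z)))"
  unfolding concave_on_iff
proof (intro conjI ballI allI impI)
  show "convex (M \<times> M)" using M_convex by (simp add: convex_Times)
next
  fix z1 z2 :: "'m \<times> 'm" and u v :: real
  assume z: "z1 \<in> M \<times> M" "z2 \<in> M \<times> M" and uv: "0 \<le> u" "0 \<le> v" "u + v = 1"
  obtain \<mu>1 \<nu>1 where z1: "z1 = (\<mu>1, \<nu>1)" "\<mu>1 \<in> M" "\<nu>1 \<in> M" using z by auto
  obtain \<mu>2 \<nu>2 where z2: "z2 = (\<mu>2, \<nu>2)" "\<mu>2 \<in> M" "\<nu>2 \<in> M" using z by auto
  define \<mu> where "\<mu> = u *\<^sub>R \<mu>1 + v *\<^sub>R \<mu>2"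
  define \<nu> where "\<nu> = u *\<^sub>R \<nu>1 + v *\<^sub>R \<nu>2"
  have m: "\<mu> \<in> M" "\<nu> \<in> M" unfolding \<mu>_def \<nu>_def using M_convex z1 z2 uv by (auto simp: convex_def)
  define \<psi> where "\<psi> = psiA \<mu> \<nu>"
  have psi: "\<psi> \<in> F" "(\<lambda>\<omega>. - \<psi> \<omega>) \<in> F" unfolding \<psi>_def using psiA_F psiA_neg_F m by auto
  have e: "2 * ln (aff \<mu> \<nu>) = \<Lambda> \<mu> \<psi> + \<Lambda> \<nu> (\<lambda>\<omega>. - \<psi> \<omega>)"
    unfolding \<Lambda>_def \<psi>_def using aff_I1[OF m] aff_I2[OF m] by simp
  have c1: "\<Lambda> \<mu> \<psi> \<ge> u * \<Lambda> \<mu>1 \<psi> + v * \<Lambda> \<mu>2 \<psi>"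
    using Lambda_concave[OF psi(1)] z1 z2 uv unfolding concave_on_iff \<mu>_def by blast
  have c2: "\<Lambda> \<nu> (\<lambda>\<omega>. - \<psi> \<omega>) \<ge> u * \<Lambda> \<nu>1 (\<lambda>\<omega>. - \<psi> \<omega>) + v * \<Lambda> \<nu>2 (\<lambda>\<omega>. - \<psi> \<omega>)"
    using Lambda_concave[OF psi(2)] z1 z2 uv unfolding concave_on_iff \<nu>_def by blast
  have h1: "u * (2 * ln (aff \<mu>1 \<nu>1)) \<le> u * (\<Lambda> \<mu>1 \<psi> + \<Lambda> \<nu>1 (\<lambda>\<omega>. - \<psi> \<omega>))"
    using hellinger[OF psi(1) z1(2,3)] uv by (intro mult_left_mono) auto
  have h2: "v * (2 * ln (aff \<mu>2 \<nu>2)) \<le> v * (\<Lambda> \<mu>2 \<psi> + \<Lambda> \<nu>2 (\<lambda>\<omega>. - \<psi> \<omega>))"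
    using hellinger[OF psi(1) z2(2,3)] uv by (intro mult_left_mono) auto
  have "u * ln (aff \<mu>1 \<nu>1) + v * ln (aff \<mu>2 \<nu>2) \<le> ln (aff \<mu> \<nu>)"
    using e c1 c2 h1 h2 by (simp add: algebra_simps)
  then show "u * ln (aff (fst z1) (snd z1)) + v * ln (aff (fst z2) (snd z2))
      \<le> ln (aff (fst (u *\<^sub>R z1 + v *\<^sub>R z2)) (snd (u *\<^sub>R z1 + v *\<^sub>R z2)))"
    unfolding z1 z2 \<mu>_def \<nu>_def by simp
qed

lemma concave_cont:
  fixes f :: "'b::euclidean_space \<Rightarrow> real"
  assumes "open S" "concave_on S f" shows "continuous_on S f"
proof -
  have "continuous_on S (\<lambda>x. - f x)" using convex_on_continuous[OF assms(1)] assms(2)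
    unfolding concave_on_def by blast
  then have "continuous_on S (\<lambda>x. - (- f x))" by (rule continuous_on_minus)
  then show ?thesis by simp
qed

lemma Lambda_cont: "\<phi> \<in> F \<Longrightarrow> continuous_on M (\<lambda>\<mu>. \<Lambda> \<mu> \<phi>)"
  using concave_cont[OF M_open Lambda_concave] .

lemma lnaff_cont: "continuous_on (M \<times> M) (\<lambda>z. ln (aff (fst z) (snd z)))"
  using concave_cont[OF open_Times[OF M_open M_open] lnaff_concave] .

definition Q :: "'m \<Rightarrow> 'a measure" where
  "Q \<mu> = density P (\<lambda>\<omega>. ennreal (p \<mu> \<omega>))"

lemma meas_Q:
  assumes "S \<in> sets P" "\<mu> \<in> M"
  shows "measure (Q \<mu>) S = (\<integral>\<omega>. indicator S \<omega> * p \<mu> \<omega> \<partial>P)"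
proof -
  have "measure (Q \<mu>) S = integral\<^sup>L (Q \<mu>) (indicator S)"
    unfolding Q_def by simp
  also have "\<dots> = (\<integral>\<omega>. p \<mu> \<omega> *\<^sub>R indicator S \<omega> \<partial>P)"
    unfolding Q_def using assms p_meas[OF assms(2)] p_pos[OF assms(2)]
    by (intro integral_density) (auto intro: less_imp_le)
  finally show ?thesis by (simp add: mult.commute)
qed

lemma int_ind: "S \<in> sets P \<Longrightarrow> \<mu> \<in> M \<Longrightarrow> integrable P (\<lambda>\<omega>. indicator S \<omega> * p \<mu> \<omega>)"
  using integrable_mult_indicator[of S P "p \<mu>"] p_int by auto

lemma meas_Q_le1: "S \<in> sets P \<Longrightarrow> \<mu> \<in> M \<Longrightarrow> measure (Q \<mu>) S \<le> 1"
proof -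
  assume a: "S \<in> sets P" "\<mu> \<in> M"
  have "(\<integral>\<omega>. indicator S \<omega> * p \<mu> \<omega> \<partial>P) \<le> (\<integral>\<omega>. p \<mu> \<omega> \<partial>P)"
    using int_ind[OF a] p_int[OF a(2)] p_pos[OF a(2)]
    by (intro integral_mono) (auto simp: indicator_def less_imp_le)
  then show ?thesis using meas_Q[OF a] p_one[OF a(2)] by simp
qed

lemma chernoff:
  assumes "\<phi> \<in> F" "\<mu> \<in> M"
  shows "measure (Q \<mu>) {\<omega>. 0 < \<phi> \<omega>} \<le> I \<mu> \<phi>"
proof -
  have S: "{\<omega>. 0 < \<phi> \<omega>} \<in> sets P"
  proof -
    have "{\<omega> \<in> space P. 0 < \<phi> \<omega>} \<in> sets P"
      using F_meas[OF assms(1)] unfolding borel_measurable_iff_greater by blast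
    then show ?thesis by simp
  qed
  have "(\<integral>\<omega>. indicator {\<omega>. 0 < \<phi> \<omega>} \<omega> * p \<mu> \<omega> \<partial>P) \<le> I \<mu> \<phi>"
    unfolding I_def using int_ind[OF S assms(2)] int_F[OF assms] p_pos[OF assms(2)]
    by (intro integral_mono) (auto simp: indicator_def less_imp_le intro!: mult_right_mono)
  then show ?thesis using meas_Q[OF S assms(2)] by simp
qed

lemma test_lb:
  assumes E: "E \<in> sets P" and m: "\<mu> \<in> M" "\<nu> \<in> M" and e: "0 < e"
    and a: "measure (Q \<mu>) E < e" and b: "measure (Q \<nu>) (UNIV - E) < e"
  shows "aff \<mu> \<nu> < 2 * sqrt e"
proof -
  define s where "s = sqrt e"
  have s: "0 < s" unfolding s_def using e by simp
  have E': "UNIV - E \<in> sets P" using E by (metis sets.compl_sets spaceP)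
  have pw: "sqrt (p \<mu> \<omega> * p \<nu> \<omega>) \<le>
      (1 / (2 * s)) * (indicator E \<omega> * p \<mu> \<omega>) + (s / 2) * (indicator E \<omega> * p \<nu> \<omega>)
      + (s / 2) * (indicator (UNIV - E) \<omega> * p \<mu> \<omega>) + (1 / (2 * s)) * (indicator (UNIV - E) \<omega> * p \<nu> \<omega>)" for \<omega>
  proof (cases "\<omega> \<in> E")
    case True
    have "sqrt (p \<mu> \<omega> * p \<nu> \<omega>) = sqrt ((p \<mu> \<omega> / s) * (s * p \<nu> \<omega>))" using s by simp
    also have "\<dots> \<le> ((p \<mu> \<omega> / s) + (s * p \<nu> \<omega>)) / 2"
      using s p_pos m by (intro arith_geo_mean_sqrt) (auto intro: less_imp_le)
    finally show ?thesis using True by (simp add: field_simps)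
  next
    case False
    have "sqrt (p \<mu> \<omega> * p \<nu> \<omega>) = sqrt ((s * p \<mu> \<omega>) * (p \<nu> \<omega> / s))" using s by simp
    also have "\<dots> \<le> ((s * p \<mu> \<omega>) + (p \<nu> \<omega> / s)) / 2"
      using s p_pos m by (intro arith_geo_mean_sqrt) (auto intro: less_imp_le)
    finally show ?thesis using False by (simp add: field_simps)
  qed
  have "aff \<mu> \<nu> \<le> (\<integral>\<omega>. (1 / (2 * s)) * (indicator E \<omega> * p \<mu> \<omega>) + (s / 2) * (indicator E \<omega> * p \<nu> \<omega>)
      + (s / 2) * (indicator (UNIV - E) \<omega> * p \<mu> \<omega>) + (1 / (2 * s)) * (indicator (UNIV - E) \<omega> * p \<nu> \<omega>) \<partial>P)"
    unfolding aff_def using pw aff_int[OF m] int_ind[OF E m(1)] int_ind[OF E m(2)] int_ind[OF E' m(1)] int_ind[OF E' m(2)]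
    by (intro integral_mono) auto
  also have "\<dots> = (1 / (2 * s)) * measure (Q \<mu>) E + (s / 2) * measure (Q \<nu>) E
      + (s / 2) * measure (Q \<mu>) (UNIV - E) + (1 / (2 * s)) * measure (Q \<nu>) (UNIV - E)"
    using int_ind[OF E m(1)] int_ind[OF E m(2)] int_ind[OF E' m(1)] int_ind[OF E' m(2)]
    by (simp add: meas_Q[OF E m(1)] meas_Q[OF E m(2)] meas_Q[OF E' m(1)] meas_Q[OF E' m(2)])
  also have "\<dots> < (1 / (2 * s)) * e + (s / 2) * 1 + (s / 2) * 1 + (1 / (2 * s)) * e"
  proof -
    have "(1 / (2 * s)) * measure (Q \<mu>) E < (1 / (2 * s)) * e" using a s by (simp add: divide_strict_right_mono)
    moreover have "(1 / (2 * s)) * measure (Q \<nu>) (UNIV - E) < (1 / (2 * s)) * e" using b s by (simp add: divide_strict_right_mono)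
    moreover have "(s / 2) * measure (Q \<nu>) E \<le> (s / 2) * 1" using meas_Q_le1[OF E m(2)] s by simp
    moreover have "(s / 2) * measure (Q \<mu>) (UNIV - E) \<le> (s / 2) * 1" using meas_Q_le1[OF E' m(1)] s by simp
    ultimately show ?thesis by linarith
  qed
  also have "\<dots> = 2 * sqrt e"
    unfolding s_def using e by (simp add: field_simps)
  finally show ?thesis .
qed

end


locale setting2 = setting P M p F
  for P :: "'a::polish_space measure" and M :: "'m::euclidean_space set"
    and p :: "'m \<Rightarrow> 'a \<Rightarrow> real" and F :: "('a \<Rightarrow> real) set" +
  fixes X :: "'n::euclidean_space set" and A :: "'n \<Rightarrow> 'm" and g :: 'n and \<epsilon> :: real
    and Lin :: "'n \<Rightarrow> 'm" and b0 :: 'm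
  assumes Xne: "X \<noteq> {}" and Xconv: "convex X" and Xcomp: "compact X"
    and Lin: "linear Lin" and Adef: "\<And>x. A x = Lin x + b0"
    and AX: "A ` X \<subseteq> M" and eps: "0 < \<epsilon>" "\<epsilon> < 1/4"
begin

lemma A_comb: "A ((1 - t) *\<^sub>R x + t *\<^sub>R y) = (1 - t) *\<^sub>R A x + t *\<^sub>R A y"
proof -
  have "Lin ((1 - t) *\<^sub>R x + t *\<^sub>R y) = (1 - t) *\<^sub>R Lin x + t *\<^sub>R Lin y"
    using Lin by (simp add: linear_add linear_scale)
  then show ?thesis unfolding Adef by (simp add: algebra_simps)
qed

lemma A_cont: "continuous_on S A"
proof -
  have "continuous_on S Lin" using Lin by (intro linear_continuous_on) (simp add: linear_conv_bounded_linear)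
  then have "continuous_on S (\<lambda>x. Lin x + b0)" by (intro continuous_intros)
  then show ?thesis unfolding Adef[abs_def] .
qed

lemma AXi: "x \<in> X \<Longrightarrow> A x \<in> M" using AX by auto

definition lA :: "'n \<times> 'n \<Rightarrow> real" where
  "lA z = ln (aff (A (fst z)) (A (snd z)))"

lemma lA_conc:
  assumes "z1 \<in> X \<times> X" "z2 \<in> X \<times> X" "0 \<le> t" "t \<le> 1"
  shows "(1 - t) * lA z1 + t * lA z2 \<le> lA ((1 - t) *\<^sub>R z1 + t *\<^sub>R z2)"
proof -
  define w1 where "w1 = (A (fst z1), A (snd z1))"
  define w2 where "w2 = (A (fst z2), A (snd z2))"
  have w: "w1 \<in> M \<times> M" "w2 \<in> M \<times> M" unfolding w1_def w2_def using assms AXi by auto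
  have "(1 - t) * ln (aff (fst w1) (snd w1)) + t * ln (aff (fst w2) (snd w2))
      \<le> ln (aff (fst ((1 - t) *\<^sub>R w1 + t *\<^sub>R w2)) (snd ((1 - t) *\<^sub>R w1 + t *\<^sub>R w2)))"
    using concave_onD[OF lnaff_concave, of t w1 w2] assms w by auto
  then show ?thesis unfolding lA_def w1_def w2_def by (simp add: A_comb)
qed

lemma lA_cont: "continuous_on (X \<times> X) lA"
proof -
  have c: "continuous_on (X \<times> X) (\<lambda>z. (A (fst z), A (snd z)))"
    by (intro continuous_intros continuous_on_compose2[OF A_cont]) auto
  have "continuous_on (X \<times> X) ((\<lambda>z. ln (aff (fst z) (snd z))) \<circ> (\<lambda>z. (A (fst z), A (snd z))))"
    by (rule continuous_on_compose[OF c]) (rule continuous_on_subset[OF lnaff_cont], use AXi in auto)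
  then show ?thesis unfolding lA_def o_def by simp
qed

definition err :: "('a \<Rightarrow> real) \<Rightarrow> 'n \<Rightarrow> real \<Rightarrow> real" where
  "err gh x \<delta> = err_prob P p A g gh x \<delta>"

lemma err_eq: "err gh x \<delta> = measure (Q (A x)) {\<omega>. \<delta> < \<bar>gh \<omega> - g \<bullet> x\<bar>}"
  unfolding err_def err_prob_def Q_def by simp

lemma set_meas:
  fixes gh :: "'a \<Rightarrow> real" and c \<delta> :: real
  assumes gh: "gh \<in> borel_measurable P"
  shows "{\<omega>. \<delta> < \<bar>gh \<omega> - c\<bar>} \<in> sets P"
proof -
  have f: "(\<lambda>\<omega>. \<bar>gh \<omega> - c\<bar>) \<in> borel_measurable P"
    by (intro borel_measurable_abs borel_measurable_diff borel_measurable_const gh)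
  have "{\<omega> \<in> space P. \<delta> < \<bar>gh \<omega> - c\<bar>} \<in> sets P" using f unfolding borel_measurable_iff_greater by blast
  then show ?thesis by simp
qed

lemma err_le1: "gh \<in> borel_measurable P \<Longrightarrow> x \<in> X \<Longrightarrow> err gh x \<delta> \<le> 1"
  unfolding err_eq using meas_Q_le1[OF set_meas AXi] by blast

lemma lb:
  assumes x: "x \<in> X" and y: "y \<in> X" and af: "2 * sqrt \<epsilon> \<le> aff (A x) (A y)"
  shows "ereal (\<bar>g \<bullet> x - g \<bullet> y\<bar> / 2) \<le> risk_star P p X A g \<epsilon>"
  unfolding risk_star_def
proof (rule INF_greatest)
  fix gh :: "'a \<Rightarrow> real" assume gh: "gh \<in> borel_measurable P"
  show "ereal (\<bar>g \<bullet> x - g \<bullet> y\<bar> / 2) \<le> risk P p X A g gh \<epsilon>"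
    unfolding risk_def
  proof (rule Inf_greatest, safe)
    fix \<delta> assume sup: "(SUP x\<in>X. err_prob P p A g gh x \<delta>) < \<epsilon>"
    have bdd: "bdd_above ((\<lambda>x. err_prob P p A g gh x \<delta>) ` X)"
      using err_le1[OF gh] unfolding err_def by (auto intro!: bdd_aboveI)
    have ex: "err gh x \<delta> < \<epsilon>" "err gh y \<delta> < \<epsilon>"
      using cSUP_upper[OF x bdd] cSUP_upper[OF y bdd] sup unfolding err_def by auto
    show "ereal (\<bar>g \<bullet> x - g \<bullet> y\<bar> / 2) \<le> ereal \<delta>"
    proof (rule ccontr)
      assume "\<not> ?thesis"
      then have big: "2 * \<delta> < \<bar>g \<bullet> x - g \<bullet> y\<bar>" by simp
      define E where "E = {\<omega>. \<delta> < \<bar>gh \<omega> - g \<bullet> x\<bar>}"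
      define E2 where "E2 = {\<omega>. \<delta> < \<bar>gh \<omega> - g \<bullet> y\<bar>}"
      have E: "E \<in> sets P" "E2 \<in> sets P" unfolding E_def E2_def using set_meas[OF gh] by auto
      have E': "UNIV - E \<in> sets P" using E by (metis sets.compl_sets spaceP)
      have sub: "UNIV - E \<subseteq> E2" unfolding E_def E2_def using big by auto
      have "measure (Q (A y)) (UNIV - E) \<le> measure (Q (A y)) E2"
        using int_ind[OF E' AXi[OF y]] int_ind[OF E(2) AXi[OF y]] sub p_pos[OF AXi[OF y]]
        by (simp add: meas_Q[OF E' AXi[OF y]] meas_Q[OF E(2) AXi[OF y]])
          (intro integral_mono, auto simp: indicator_def less_imp_le)
      also have "\<dots> < \<epsilon>" using ex(2) unfolding err_eq E2_def .
      finally have "aff (A x) (A y) < 2 * sqrt \<epsilon>"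
        using test_lb[OF E(1) AXi[OF x] AXi[OF y] eps(1)] ex(1) unfolding err_eq E_def by blast
      then show False using af by simp
    qed
  qed
qed

end

context setting2 begin

definition cc :: real where "cc = ln (2 / \<epsilon>)"
definition ll :: real where "ll = - ln (2 * sqrt \<epsilon>)"

lemma sqrt_eps: "2 * sqrt \<epsilon> < 1"
proof -
  have "sqrt \<epsilon> < sqrt (1/4)" using eps by (intro real_sqrt_less_mono) auto
  also have "sqrt (1/4) = (1/2::real)" by (simp add: real_sqrt_divide)
  finally show ?thesis by simp
qed

lemma ll_pos: "0 < ll"
  unfolding ll_def using sqrt_eps eps by simp

lemma cc_ge: "ll \<le> cc"
proof -
  have "1 / (2 * sqrt \<epsilon>) \<le> 2 / \<epsilon>"
  proof -
    have s1: "sqrt \<epsilon> \<le> 1" using eps by simp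
    have "sqrt \<epsilon> * sqrt \<epsilon> \<le> sqrt \<epsilon> * 4" by (rule mult_left_mono) (use s1 eps in \<open>linarith\<close>, use eps in simp)
    moreover have "\<epsilon> = sqrt \<epsilon> * sqrt \<epsilon>" using eps by simp
    ultimately
    have "\<epsilon> \<le> sqrt \<epsilon> * 4" by linarith
    then show ?thesis using eps by (simp add: field_simps)
  qed
  then have "ln (1 / (2 * sqrt \<epsilon>)) \<le> ln (2 / \<epsilon>)" using eps by (subst ln_le_cancel_iff) auto
  then show ?thesis unfolding ll_def cc_def using eps by (simp add: ln_div)
qed

lemma cc_pos: "0 < cc" using ll_pos cc_ge by simp

lemma theta_eq: "2 * ln (2 / \<epsilon>) / ln (1 / (4 * \<epsilon>)) = cc / ll"
proof -
  have e: "4 * \<epsilon> = (2 * sqrt \<epsilon>) ^ 2" using eps by (simp add: power_mult_distrib)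
  have "ln ((2 * sqrt \<epsilon>) ^ 2) = 2 * ln (2 * sqrt \<epsilon>)" using eps by (subst ln_realpow) auto
  then have "ln (4 * \<epsilon>) = 2 * ln (2 * sqrt \<epsilon>)" by (subst e)
  then have "ln (1 / (4 * \<epsilon>)) = - 2 * ln (2 * sqrt \<epsilon>)" using eps by (simp add: ln_div)
  then show ?thesis unfolding cc_def ll_def by simp
qed

lemma aff_self_X: "x \<in> X \<Longrightarrow> aff (A x) (A x) = 1" using aff_self AXi by blast

lemma rstar_nonneg: "0 \<le> risk_star P p X A g \<epsilon>"
proof -
  obtain x where x: "x \<in> X" using Xne by blast
  have "ereal (\<bar>g \<bullet> x - g \<bullet> x\<bar> / 2) \<le> risk_star P p X A g \<epsilon>"
    using lb[OF x x] aff_self_X[OF x] sqrt_eps by simp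
  then show ?thesis by (simp add: zero_ereal_def)
qed

lemma stepA:
  assumes R: "risk_star P p X A g \<epsilon> = ereal R" and z: "z \<in> X \<times> X" and lz: "- cc \<le> lA z"
  shows "\<bar>g \<bullet> fst z - g \<bullet> snd z\<bar> / 2 \<le> (cc / ll) * R"
proof -
  obtain x y where xy: "z = (x, y)" "x \<in> X" "y \<in> X" using z by auto
  define t where "t = ll / cc"
  have t: "0 < t" "t \<le> 1" unfolding t_def using ll_pos cc_ge cc_pos by auto
  define m where "m = (1/2) *\<^sub>R x + (1/2) *\<^sub>R y"
  have m: "m \<in> X" unfolding m_def using Xconv xy by (auto simp: convex_def)
  define xt where "xt = (1 - t) *\<^sub>R m + t *\<^sub>R x"
  define yt where "yt = (1 - t) *\<^sub>R m + t *\<^sub>R y"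
  have xt: "xt \<in> X" "yt \<in> X" unfolding xt_def yt_def using Xconv xy m t by (auto simp: convex_def)
  have "(1 - t) * lA (m, m) + t * lA z \<le> lA ((1 - t) *\<^sub>R (m, m) + t *\<^sub>R z)"
    using lA_conc[of "(m, m)" z t] m z t by auto
  moreover have "lA (m, m) = 0" unfolding lA_def using aff_self_X[OF m] by simp
  moreover have "(1 - t) *\<^sub>R (m, m) + t *\<^sub>R z = (xt, yt)" unfolding xt_def yt_def xy by simp
  ultimately have "t * lA z \<le> lA (xt, yt)" by simp
  moreover have "t * (- cc) \<le> t * lA z" using lz t by (intro mult_left_mono) auto
  moreover have "t * (- cc) = - ll" unfolding t_def using cc_pos by simp
  ultimately have "- ll \<le> ln (aff (A xt) (A yt))" unfolding lA_def by simp
  then have "exp (- ll) \<le> aff (A xt) (A yt)"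
    using aff_pos[OF AXi[OF xt(1)] AXi[OF xt(2)]] by (metis exp_le_cancel_iff exp_ln)
  moreover have "exp (- ll) = 2 * sqrt \<epsilon>" unfolding ll_def using eps by simp
  ultimately have "ereal (\<bar>g \<bullet> xt - g \<bullet> yt\<bar> / 2) \<le> ereal R" using lb[OF xt] R by simp
  then have le: "\<bar>g \<bullet> xt - g \<bullet> yt\<bar> / 2 \<le> R" by simp
  have "g \<bullet> xt - g \<bullet> yt = t * (g \<bullet> x - g \<bullet> y)"
    unfolding xt_def yt_def by (simp add: inner_add_right algebra_simps)
  then have "t * (\<bar>g \<bullet> x - g \<bullet> y\<bar> / 2) \<le> R" using le t by (simp add: abs_mult)
  then have "\<bar>g \<bullet> x - g \<bullet> y\<bar> / 2 \<le> R / t" using t by (simp add: field_simps)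
  then show ?thesis unfolding xy t_def using ll_pos cc_pos by (simp add: mult_ac)
qed

end
context setting2 begin

lemma R_nonneg: "risk_star P p X A g \<epsilon> = ereal R \<Longrightarrow> 0 \<le> R"
  using rstar_nonneg by simp

lemma stepB:
  assumes R: "risk_star P p X A g \<epsilon> = ereal R" and eta: "0 < \<eta>"
  shows "\<exists>\<beta>>0. \<forall>z\<in>X \<times> X. (g \<bullet> snd z - g \<bullet> fst z) / 2 + \<beta> * (lA z + cc) \<le> (cc / ll) * R + \<eta>"
proof -
  define G where "G \<beta> z = (g \<bullet> snd z - g \<bullet> fst z) / 2 + \<beta> * (lA z + cc)" for \<beta> :: real and z :: "'n \<times> 'n"
  have R0: "0 \<le> (cc / ll) * R" using R_nonneg[OF R] cc_pos ll_pos by simp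
  have "\<exists>k\<in>{\<beta>::real. 0 < \<beta>}. \<forall>z\<in>X \<times> X. G k z \<le> (cc / ll) * R + \<eta>"
  proof (rule minimax_aux)
    show "compact (X \<times> X)" using Xcomp by (simp add: compact_Times)
    show "convex (X \<times> X)" using Xconv by (simp add: convex_Times)
    show "X \<times> X \<noteq> {}" using Xne by simp
  next
    fix k z1 z2 and t :: real
    assume k: "k \<in> {\<beta>::real. 0 < \<beta>}" and z: "z1 \<in> X \<times> X" "z2 \<in> X \<times> X" and t: "0 \<le> t" "t \<le> 1"
    have m1: "k * ((1 - t) * lA z1 + t * lA z2) \<le> k * lA ((1 - t) *\<^sub>R z1 + t *\<^sub>R z2)"
      using lA_conc[OF z t] k by (intro mult_left_mono) auto
    have m2: "g \<bullet> snd ((1 - t) *\<^sub>R z1 + t *\<^sub>R z2) - g \<bullet> fst ((1 - t) *\<^sub>R z1 + t *\<^sub>R z2)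
        = (1 - t) * (g \<bullet> snd z1 - g \<bullet> fst z1) + t * (g \<bullet> snd z2 - g \<bullet> fst z2)"
      by (simp add: inner_add_right algebra_simps)
    have m3: "(1 - t) * G k z1 + t * G k z2 = ((1 - t) * (g \<bullet> snd z1 - g \<bullet> fst z1) + t * (g \<bullet> snd z2 - g \<bullet> fst z2)) / 2
        + k * ((1 - t) * lA z1 + t * lA z2) + k * cc"
      unfolding G_def by (simp add: field_simps)
    have m4: "G k ((1 - t) *\<^sub>R z1 + t *\<^sub>R z2) = (g \<bullet> snd ((1 - t) *\<^sub>R z1 + t *\<^sub>R z2) - g \<bullet> fst ((1 - t) *\<^sub>R z1 + t *\<^sub>R z2)) / 2
        + k * lA ((1 - t) *\<^sub>R z1 + t *\<^sub>R z2) + k * cc"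
      unfolding G_def by (simp only: distrib_left add.assoc)
    show "(1 - t) * G k z1 + t * G k z2 \<le> G k ((1 - t) *\<^sub>R z1 + t *\<^sub>R z2)"
      unfolding m3 m4 m2 using m1 by linarith
  next
    fix k assume "k \<in> {\<beta>::real. 0 < \<beta>}"
    show "continuous_on (X \<times> X) (G k)"
      unfolding G_def by (intro continuous_intros lA_cont) auto
  next
    fix kk :: "('n \<times> 'n) \<times> real \<Rightarrow> real" and w :: "('n \<times> 'n) \<times> real \<Rightarrow> real"
    assume kk: "\<And>b. b \<in> Basis \<Longrightarrow> kk b \<in> {\<beta>::real. 0 < \<beta>}"
      and w: "\<And>b. b \<in> Basis \<Longrightarrow> 0 \<le> w b" "(\<Sum>b\<in>Basis. w b) = 1"
    define k where "k = (\<Sum>b\<in>Basis. w b * kk b)"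
    obtain b1 where b1: "b1 \<in> Basis" "w b1 \<noteq> 0"
    proof (rule ccontr)
      assume "\<not> thesis"
      then have "\<forall>b\<in>Basis. w b = 0" using that by blast
      then show False using w(2) by simp
    qed
    have wb: "0 < w b1" using w(1)[OF b1(1)] b1(2) by simp
    have kb: "0 < kk b1" using kk[OF b1(1)] by simp
    have nn: "0 \<le> w b * kk b" if "b \<in> Basis" for b
      using w(1)[OF that] kk[OF that] by (simp add: less_imp_le)
    have "0 < k" unfolding k_def
      by (rule sum_pos2[OF finite_Basis b1(1)]) (use wb kb nn in auto)
    moreover have "G k z = (\<Sum>b\<in>Basis. w b * G (kk b) z)" for z
    proof -
      have "(\<Sum>b\<in>Basis. w b * G (kk b) z) = (\<Sum>b\<in>Basis. w b * ((g \<bullet> snd z - g \<bullet> fst z) / 2)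
          + (w b * kk b) * (lA z + cc))"
        unfolding G_def by (intro sum.cong refl) (simp add: algebra_simps)
      also have "\<dots> = (\<Sum>b\<in>Basis. w b) * ((g \<bullet> snd z - g \<bullet> fst z) / 2)
          + (\<Sum>b\<in>Basis. w b * kk b) * (lA z + cc)"
        by (simp add: sum.distrib sum_distrib_right)
      finally have "(\<Sum>b\<in>Basis. w b * G (kk b) z) = (\<Sum>b\<in>Basis. w b) * ((g \<bullet> snd z - g \<bullet> fst z) / 2)
          + (\<Sum>b\<in>Basis. w b * kk b) * (lA z + cc)" .
      then show ?thesis unfolding G_def k_def using w(2) by simp
    qed
    ultimately show "\<exists>k\<in>{\<beta>::real. 0 < \<beta>}. \<forall>z\<in>X \<times> X. G k z \<le> (\<Sum>b\<in>Basis. w b * G (kk b) z)"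
      by (intro bexI[of _ k]) auto
  next
    fix z assume z: "z \<in> X \<times> X"
    define D where "D = lA z + cc"
    have gap: "(g \<bullet> snd z - g \<bullet> fst z) / 2 \<le> \<bar>g \<bullet> fst z - g \<bullet> snd z\<bar> / 2" by (simp add: abs_if)
    show "\<exists>k\<in>{\<beta>::real. 0 < \<beta>}. G k z < (cc / ll) * R + \<eta>"
    proof (cases "0 \<le> D")
      case True
      have A: "\<bar>g \<bullet> fst z - g \<bullet> snd z\<bar> / 2 \<le> (cc / ll) * R"
        using stepA[OF R z] True unfolding D_def by simp
      define \<beta> where "\<beta> = \<eta> / (2 * (D + 1))"
      have b: "0 < \<beta>" unfolding \<beta>_def using True eta by simp
      have "\<beta> * D \<le> \<eta> / 2"
      proof -
        have "\<beta> * D = (\<eta> / 2) * (D / (D + 1))" unfolding \<beta>_def using True by (simp add: field_simps)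
        also have "\<dots> \<le> (\<eta> / 2) * 1" using True eta by (intro mult_left_mono) auto
        finally show ?thesis by simp
      qed
      then have "G \<beta> z < (cc / ll) * R + \<eta>" unfolding G_def D_def[symmetric] using A gap eta by linarith
      then show ?thesis using b by blast
    next
      case False
      define \<beta> where "\<beta> = (\<bar>g \<bullet> fst z - g \<bullet> snd z\<bar> / 2 + 1) / (- D)"
      have b: "0 < \<beta>" unfolding \<beta>_def using False by (simp add: field_simps add_pos_nonneg)
      have "\<beta> * D = - (\<bar>g \<bullet> fst z - g \<bullet> snd z\<bar> / 2 + 1)" unfolding \<beta>_def using False by simp
      then have "G \<beta> z < (cc / ll) * R + \<eta>" unfolding G_def D_def[symmetric] using gap eta R0 by linarith
      then show ?thesis using b by blast
    qed
  qed
  then show ?thesis unfolding G_def by auto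
qed

end

context setting2 begin

definition GG :: "real \<Rightarrow> ('a \<Rightarrow> real) \<Rightarrow> 'n \<times> 'n \<Rightarrow> real" where
  "GG \<beta> \<psi> z = \<beta> * \<Lambda> (A (fst z)) (\<lambda>\<omega>. (1 / \<beta>) * \<psi> \<omega>) + \<beta> * \<Lambda> (A (snd z)) (\<lambda>\<omega>. (- 1 / \<beta>) * \<psi> \<omega>)
     + (g \<bullet> snd z - g \<bullet> fst z)"

lemma Lambda_A_conc:
  assumes "\<phi> \<in> F" "x1 \<in> X" "x2 \<in> X" "0 \<le> t" "t \<le> 1"
  shows "(1 - t) * \<Lambda> (A x1) \<phi> + t * \<Lambda> (A x2) \<phi> \<le> \<Lambda> (A ((1 - t) *\<^sub>R x1 + t *\<^sub>R x2)) \<phi>"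
  using concave_onD[OF Lambda_concave[OF assms(1)], of t "A x1" "A x2"] assms AXi
  by (simp add: A_comb)

lemma Lambda_A_cont: "\<phi> \<in> F \<Longrightarrow> continuous_on (X \<times> X) (\<lambda>z. \<Lambda> (A (fst z)) \<phi>)"
     "\<phi> \<in> F \<Longrightarrow> continuous_on (X \<times> X) (\<lambda>z. \<Lambda> (A (snd z)) \<phi>)"
proof -
  assume f: "\<phi> \<in> F"
  have c1: "continuous_on (X \<times> X) (\<lambda>z. A (fst z))" "continuous_on (X \<times> X) (\<lambda>z. A (snd z))"
    by (intro continuous_on_compose2[OF A_cont] continuous_intros, auto)+
  show "continuous_on (X \<times> X) (\<lambda>z. \<Lambda> (A (fst z)) \<phi>)"
    by (rule continuous_on_compose2[OF Lambda_cont[OF f] c1(1)]) (use AXi in auto)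
  show "continuous_on (X \<times> X) (\<lambda>z. \<Lambda> (A (snd z)) \<phi>)"
    by (rule continuous_on_compose2[OF Lambda_cont[OF f] c1(2)]) (use AXi in auto)
qed

lemma stepC:
  assumes b: "0 < \<beta>" and hB: "\<forall>z\<in>X \<times> X. (g \<bullet> snd z - g \<bullet> fst z) / 2 + \<beta> * (lA z + cc) \<le> T"
    and eta: "0 < \<eta>"
  shows "\<exists>\<psi>\<in>F. \<forall>z\<in>X \<times> X. GG \<beta> \<psi> z \<le> 2 * T - 2 * \<beta> * cc + \<eta>"
proof (rule minimax_aux)
  show "compact (X \<times> X)" using Xcomp by (simp add: compact_Times)
  show "convex (X \<times> X)" using Xconv by (simp add: convex_Times)
  show "X \<times> X \<noteq> {}" using Xne by simp
next
  fix k z1 z2 and t :: real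
  assume k: "k \<in> F" and z: "z1 \<in> X \<times> X" "z2 \<in> X \<times> X" and t: "0 \<le> t" "t \<le> 1"
  have k1: "(\<lambda>\<omega>. (1 / \<beta>) * k \<omega>) \<in> F" and k2: "(\<lambda>\<omega>. (- 1 / \<beta>) * k \<omega>) \<in> F"
    by (rule F_scale[OF k])+
  have c1: "\<beta> * ((1 - t) * \<Lambda> (A (fst z1)) (\<lambda>\<omega>. (1 / \<beta>) * k \<omega>) + t * \<Lambda> (A (fst z2)) (\<lambda>\<omega>. (1 / \<beta>) * k \<omega>))
     \<le> \<beta> * \<Lambda> (A ((1 - t) *\<^sub>R fst z1 + t *\<^sub>R fst z2)) (\<lambda>\<omega>. (1 / \<beta>) * k \<omega>)"
    using Lambda_A_conc[OF k1, of "fst z1" "fst z2" t] z t b by (intro mult_left_mono) auto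
  have c2: "\<beta> * ((1 - t) * \<Lambda> (A (snd z1)) (\<lambda>\<omega>. (- 1 / \<beta>) * k \<omega>) + t * \<Lambda> (A (snd z2)) (\<lambda>\<omega>. (- 1 / \<beta>) * k \<omega>))
     \<le> \<beta> * \<Lambda> (A ((1 - t) *\<^sub>R snd z1 + t *\<^sub>R snd z2)) (\<lambda>\<omega>. (- 1 / \<beta>) * k \<omega>)"
    using Lambda_A_conc[OF k2, of "snd z1" "snd z2" t] z t b by (intro mult_left_mono) auto
  have m2: "g \<bullet> snd ((1 - t) *\<^sub>R z1 + t *\<^sub>R z2) - g \<bullet> fst ((1 - t) *\<^sub>R z1 + t *\<^sub>R z2)
      = (1 - t) * (g \<bullet> snd z1 - g \<bullet> fst z1) + t * (g \<bullet> snd z2 - g \<bullet> fst z2)"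
    by (simp add: inner_add_right algebra_simps)
  show "(1 - t) * GG \<beta> k z1 + t * GG \<beta> k z2 \<le> GG \<beta> k ((1 - t) *\<^sub>R z1 + t *\<^sub>R z2)"
    using c1 c2 m2 unfolding GG_def by (simp add: algebra_simps)
next
  fix k assume k: "k \<in> F"
  have k1: "(\<lambda>\<omega>. (1 / \<beta>) * k \<omega>) \<in> F" and k2: "(\<lambda>\<omega>. (- 1 / \<beta>) * k \<omega>) \<in> F"
    by (rule F_scale[OF k])+
  show "continuous_on (X \<times> X) (GG \<beta> k)"
    unfolding GG_def[abs_def] by (intro continuous_intros Lambda_A_cont k1 k2)
next
  fix kk :: "('n \<times> 'n) \<times> real \<Rightarrow> 'a \<Rightarrow> real" and w :: "('n \<times> 'n) \<times> real \<Rightarrow> real"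
  assume kk: "\<And>b. b \<in> Basis \<Longrightarrow> kk b \<in> F"
    and w: "\<And>b. b \<in> Basis \<Longrightarrow> 0 \<le> w b" "(\<Sum>b\<in>Basis. w b) = 1"
  define k where "k = (\<lambda>\<omega>. \<Sum>b\<in>Basis. w b * kk b \<omega>)"
  have kF: "k \<in> F" unfolding k_def by (rule F_sum[OF finite_Basis kk])
  have "GG \<beta> k z \<le> (\<Sum>b\<in>Basis. w b * GG \<beta> (kk b) z)" if z: "z \<in> X \<times> X" for z
  proof -
    have mf: "A (fst z) \<in> M" "A (snd z) \<in> M" using z AXi by auto
    have e1: "(\<lambda>\<omega>. (1 / \<beta>) * k \<omega>) = (\<lambda>\<omega>. \<Sum>b\<in>Basis. w b * ((1 / \<beta>) * kk b \<omega>))"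
      unfolding k_def by (simp add: sum_distrib_left mult_ac)
    have e2: "(\<lambda>\<omega>. (- 1 / \<beta>) * k \<omega>) = (\<lambda>\<omega>. \<Sum>b\<in>Basis. w b * ((- 1 / \<beta>) * kk b \<omega>))"
      unfolding k_def by (simp add: sum_distrib_left mult_ac)
    have j1: "\<Lambda> (A (fst z)) (\<lambda>\<omega>. (1 / \<beta>) * k \<omega>) \<le> (\<Sum>b\<in>Basis. w b * \<Lambda> (A (fst z)) (\<lambda>\<omega>. (1 / \<beta>) * kk b \<omega>))"
      unfolding e1 by (rule Lambda_jensen[OF finite_Basis w(1) w(2) F_scale[OF kk] mf(1)])
    have j2: "\<Lambda> (A (snd z)) (\<lambda>\<omega>. (- 1 / \<beta>) * k \<omega>) \<le> (\<Sum>b\<in>Basis. w b * \<Lambda> (A (snd z)) (\<lambda>\<omega>. (- 1 / \<beta>) * kk b \<omega>))"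
      unfolding e2 by (rule Lambda_jensen[OF finite_Basis w(1) w(2) F_scale[OF kk] mf(2)])
    have "GG \<beta> k z \<le> \<beta> * (\<Sum>b\<in>Basis. w b * \<Lambda> (A (fst z)) (\<lambda>\<omega>. (1 / \<beta>) * kk b \<omega>))
        + \<beta> * (\<Sum>b\<in>Basis. w b * \<Lambda> (A (snd z)) (\<lambda>\<omega>. (- 1 / \<beta>) * kk b \<omega>))
        + (\<Sum>b\<in>Basis. w b) * (g \<bullet> snd z - g \<bullet> fst z)"
      unfolding GG_def using j1 j2 b w(2) by (simp add: add_mono mult_left_mono)
    also have "\<dots> = (\<Sum>b\<in>Basis. \<beta> * (w b * \<Lambda> (A (fst z)) (\<lambda>\<omega>. (1 / \<beta>) * kk b \<omega>))
        + \<beta> * (w b * \<Lambda> (A (snd z)) (\<lambda>\<omega>. (- 1 / \<beta>) * kk b \<omega>)) + w b * (g \<bullet> snd z - g \<bullet> fst z))"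
      by (simp only: sum.distrib sum_distrib_left sum_distrib_right)
    also have "\<dots> = (\<Sum>b\<in>Basis. w b * GG \<beta> (kk b) z)"
      unfolding GG_def by (intro sum.cong refl) (simp add: algebra_simps)
    finally show ?thesis .
  qed
  then show "\<exists>k\<in>F. \<forall>z\<in>X \<times> X. GG \<beta> k z \<le> (\<Sum>b\<in>Basis. w b * GG \<beta> (kk b) z)"
    using kF by blast
next
  fix z assume z: "z \<in> X \<times> X"
  have mf: "A (fst z) \<in> M" "A (snd z) \<in> M" using z AXi by auto
  define \<psi> where "\<psi> = (\<lambda>\<omega>. \<beta> * psiA (A (fst z)) (A (snd z)) \<omega>)"
  have psiF: "\<psi> \<in> F" unfolding \<psi>_def by (rule F_scale[OF psiA_F[OF mf]])
  have e1: "(\<lambda>\<omega>. (1 / \<beta>) * \<psi> \<omega>) = psiA (A (fst z)) (A (snd z))" unfolding \<psi>_def using b by auto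
  have e2: "(\<lambda>\<omega>. (- 1 / \<beta>) * \<psi> \<omega>) = (\<lambda>\<omega>. - psiA (A (fst z)) (A (snd z)) \<omega>)" unfolding \<psi>_def using b by auto
  have "GG \<beta> \<psi> z = 2 * \<beta> * lA z + (g \<bullet> snd z - g \<bullet> fst z)"
    unfolding GG_def e1 e2 \<Lambda>_def lA_def using aff_I1[OF mf] aff_I2[OF mf] by simp
  also have "\<dots> < 2 * T - 2 * \<beta> * cc + \<eta>"
  proof -
    have "(g \<bullet> snd z - g \<bullet> fst z) / 2 + \<beta> * (lA z + cc) \<le> T" using hB z by blast
    then have "(g \<bullet> snd z - g \<bullet> fst z) / 2 + \<beta> * lA z + \<beta> * cc \<le> T" by (simp add: distrib_left)
    then show ?thesis using eta by argo
  qed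
  finally show "\<exists>k\<in>F. GG \<beta> k z < 2 * T - 2 * \<beta> * cc + \<eta>" using psiF by blast
qed

end


context setting begin

lemma pos_set_meas: "\<phi> \<in> F \<Longrightarrow> {\<omega>. 0 < \<phi> \<omega>} \<in> sets P"
proof -
  assume f: "\<phi> \<in> F"
  have "{\<omega> \<in> space P. 0 < \<phi> \<omega>} \<in> sets P"
    using F_meas[OF f] unfolding borel_measurable_iff_greater by blast
  then show ?thesis by simp
qed

lemma meas_union_le:
  assumes "E \<in> sets P" "S1 \<in> sets P" "S2 \<in> sets P" "E \<subseteq> S1 \<union> S2" "\<mu> \<in> M"
  shows "measure (Q \<mu>) E \<le> measure (Q \<mu>) S1 + measure (Q \<mu>) S2"
proof -
  have "(\<integral>\<omega>. indicator E \<omega> * p \<mu> \<omega> \<partial>P) \<le> (\<integral>\<omega>. indicator S1 \<omega> * p \<mu> \<omega> + indicator S2 \<omega> * p \<mu> \<omega> \<partial>P)"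
    using int_ind[OF assms(1,5)] int_ind[OF assms(2,5)] int_ind[OF assms(3,5)] p_pos[OF assms(5)] assms(4)
    by (intro integral_mono) (auto simp: indicator_def less_imp_le)
  also have "\<dots> = (\<integral>\<omega>. indicator S1 \<omega> * p \<mu> \<omega> \<partial>P) + (\<integral>\<omega>. indicator S2 \<omega> * p \<mu> \<omega> \<partial>P)"
    using int_ind[OF assms(2,5)] int_ind[OF assms(3,5)] by simp
  finally show ?thesis using meas_Q assms by simp
qed

end

context setting2 begin

lemma stepD:
  assumes b: "0 < \<beta>" and psi: "\<psi> \<in> F" and hC: "\<forall>z\<in>X \<times> X. GG \<beta> \<psi> z \<le> C1" and eta: "0 < \<eta>"
  shows "riskA P p F X A g \<epsilon> \<le> ereal (C1 / 2 + \<beta> * cc + \<eta>)"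
proof -
  define \<psi>1 where "\<psi>1 = (\<lambda>\<omega>. (1 / \<beta>) * \<psi> \<omega>)"
  define \<psi>2 where "\<psi>2 = (\<lambda>\<omega>. (- 1 / \<beta>) * \<psi> \<omega>)"
  have psi12: "\<psi>1 \<in> F" "\<psi>2 \<in> F" unfolding \<psi>1_def \<psi>2_def by (rule F_scale[OF psi])+
  define U where "U x = \<beta> * \<Lambda> (A x) \<psi>1 - g \<bullet> x" for x
  define V where "V y = \<beta> * \<Lambda> (A y) \<psi>2 + g \<bullet> y" for y
  have UV: "U x + V y \<le> C1" if "x \<in> X" "y \<in> X" for x y
    using hC that unfolding GG_def U_def V_def \<psi>1_def \<psi>2_def by (force simp: algebra_simps)
  obtain x0 where x0: "x0 \<in> X" using Xne by blast
  define Up where "Up = Sup (U ` X)"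
  have bdd: "bdd_above (U ` X)" using UV[OF _ x0] by (intro bdd_aboveI[of _ "C1 - V x0"]) (auto simp: algebra_simps)
  have Ule: "U x \<le> Up" if "x \<in> X" for x unfolding Up_def using bdd that by (intro cSup_upper) auto
  have Vle: "V y \<le> C1 - Up" if "y \<in> X" for y
  proof -
    have "Up \<le> C1 - V y" unfolding Up_def using Xne UV[OF _ that]
      by (intro cSup_least) (auto simp: algebra_simps)
    then show ?thesis by simp
  qed
  define a where "a = C1 / 2 - Up"
  define gh where "gh = (\<lambda>\<omega>. \<psi> \<omega> + a)"
  have ghF: "gh \<in> F" unfolding gh_def by (rule F_add_const[OF psi])
  define \<delta> where "\<delta> = C1 / 2 + \<beta> * cc + \<eta>"
  define B where "B = \<epsilon> * exp (- \<eta> / \<beta>)"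
  have B: "B < \<epsilon>" unfolding B_def using eps b eta by simp
  have half: "exp (- cc) = \<epsilon> / 2" unfolding cc_def using eps by (simp add: exp_minus inverse_eq_divide)
  have errx: "err gh x \<delta> \<le> B" if x: "x \<in> X" for x
  proof -
    have m: "A x \<in> M" using AXi[OF x] .
    define \<phi>1 where "\<phi>1 = (\<lambda>\<omega>. \<psi>1 \<omega> + (a - g \<bullet> x - \<delta>) / \<beta>)"
    define \<phi>2 where "\<phi>2 = (\<lambda>\<omega>. \<psi>2 \<omega> + (g \<bullet> x - a - \<delta>) / \<beta>)"
    have phiF: "\<phi>1 \<in> F" "\<phi>2 \<in> F" unfolding \<phi>1_def \<phi>2_def by (rule F_add_const[OF psi12(1)], rule F_add_const[OF psi12(2)])
    define E where "E = {\<omega>. \<delta> < \<bar>gh \<omega> - g \<bullet> x\<bar>}"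
    have E: "E \<in> sets P" unfolding E_def using set_meas F_meas[OF ghF] by blast
    have sub: "E \<subseteq> {\<omega>. 0 < \<phi>1 \<omega>} \<union> {\<omega>. 0 < \<phi>2 \<omega>}"
    proof
      fix \<omega> assume "\<omega> \<in> E"
      then have "\<delta> < \<psi> \<omega> + a - g \<bullet> x \<or> \<delta> < - (\<psi> \<omega> + a - g \<bullet> x)" unfolding E_def gh_def by (auto simp: abs_if split: if_splits)
      then show "\<omega> \<in> {\<omega>. 0 < \<phi>1 \<omega>} \<union> {\<omega>. 0 < \<phi>2 \<omega>}"
      proof
        assume "\<delta> < \<psi> \<omega> + a - g \<bullet> x"
        then have "0 < (\<psi> \<omega> + a - g \<bullet> x - \<delta>) / \<beta>" using b by simp
        then show ?thesis unfolding \<phi>1_def \<psi>1_def by (simp add: diff_divide_distrib add_divide_distrib)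
      next
        assume "\<delta> < - (\<psi> \<omega> + a - g \<bullet> x)"
        then have "0 < (- \<psi> \<omega> - a + g \<bullet> x - \<delta>) / \<beta>" using b by simp
        then show ?thesis unfolding \<phi>2_def \<psi>2_def by (simp add: diff_divide_distrib add_divide_distrib)
      qed
    qed
    have Ipos1: "0 < I (A x) \<psi>1" "0 < I (A x) \<psi>2" using I_pos psi12 m by auto
    have t1: "I (A x) \<phi>1 \<le> (\<epsilon> / 2) * exp (- \<eta> / \<beta>)"
    proof -
      have "I (A x) \<phi>1 = exp ((a - g \<bullet> x - \<delta>) / \<beta>) * exp (\<Lambda> (A x) \<psi>1)"
        unfolding \<phi>1_def using I_const[OF psi12(1) m] Ipos1 by (simp add: \<Lambda>_def)
      also have "\<dots> = exp ((U x + a - \<delta>) / \<beta>)"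
        unfolding U_def using b by (simp add: exp_add[symmetric] field_simps)
      also have "\<dots> \<le> exp ((C1 / 2 - \<delta>) / \<beta>)"
        using Ule[OF x] b unfolding a_def by (simp add: divide_right_mono)
      also have "(C1 / 2 - \<delta>) / \<beta> = - cc + (- \<eta> / \<beta>)"
        unfolding \<delta>_def using b by (simp add: field_simps)
      finally have "I (A x) \<phi>1 \<le> exp (- cc + (- \<eta> / \<beta>))" .
      also have "exp (- cc + (- \<eta> / \<beta>)) = (\<epsilon> / 2) * exp (- \<eta> / \<beta>)" by (simp only: exp_add half)
      finally show ?thesis .
    qed
    have t2: "I (A x) \<phi>2 \<le> (\<epsilon> / 2) * exp (- \<eta> / \<beta>)"
    proof -
      have "I (A x) \<phi>2 = exp ((g \<bullet> x - a - \<delta>) / \<beta>) * exp (\<Lambda> (A x) \<psi>2)"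
        unfolding \<phi>2_def using I_const[OF psi12(2) m] Ipos1 by (simp add: \<Lambda>_def)
      also have "\<dots> = exp ((V x - a - \<delta>) / \<beta>)"
        unfolding V_def using b by (simp add: exp_add[symmetric] field_simps)
      also have "\<dots> \<le> exp ((C1 / 2 - \<delta>) / \<beta>)"
        using Vle[OF x] b unfolding a_def by (simp add: divide_right_mono)
      also have "(C1 / 2 - \<delta>) / \<beta> = - cc + (- \<eta> / \<beta>)"
        unfolding \<delta>_def using b by (simp add: field_simps)
      finally have "I (A x) \<phi>2 \<le> exp (- cc + (- \<eta> / \<beta>))" .
      also have "exp (- cc + (- \<eta> / \<beta>)) = (\<epsilon> / 2) * exp (- \<eta> / \<beta>)" by (simp only: exp_add half)
      finally show ?thesis .
    qed
    have "err gh x \<delta> = measure (Q (A x)) E" unfolding err_eq E_def ..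
    also have "\<dots> \<le> measure (Q (A x)) {\<omega>. 0 < \<phi>1 \<omega>} + measure (Q (A x)) {\<omega>. 0 < \<phi>2 \<omega>}"
      by (rule meas_union_le[OF E pos_set_meas[OF phiF(1)] pos_set_meas[OF phiF(2)] sub m])
    also have "\<dots> \<le> I (A x) \<phi>1 + I (A x) \<phi>2"
      using chernoff[OF phiF(1) m] chernoff[OF phiF(2) m] by simp
    also have "\<dots> \<le> B" using t1 t2 unfolding B_def by simp
    finally show ?thesis .
  qed
  have "(SUP x\<in>X. err_prob P p A g gh x \<delta>) \<le> B"
    using errx Xne unfolding err_def by (intro cSUP_least) auto
  then have "(SUP x\<in>X. err_prob P p A g gh x \<delta>) < \<epsilon>" using B by simp
  then have "risk P p X A g gh \<epsilon> \<le> ereal \<delta>"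
    unfolding risk_def by (intro Inf_lower) auto
  moreover have "riskA P p F X A g \<epsilon> \<le> risk P p X A g gh \<epsilon>"
    unfolding riskA_def using ghF by (rule INF_lower)
  ultimately show ?thesis unfolding \<delta>_def by simp
qed

lemma main:
  "riskA P p F X A g \<epsilon> \<le> ereal (2 * ln (2 / \<epsilon>) / ln (1 / (4 * \<epsilon>))) * risk_star P p X A g \<epsilon>"
proof (cases "risk_star P p X A g \<epsilon>")
  case (real R)
  have "riskA P p F X A g \<epsilon> \<le> ereal ((cc / ll) * R) + ereal e" if e: "0 < e" for e
  proof -
    obtain \<beta> where b: "0 < \<beta>" and hB: "\<forall>z\<in>X \<times> X. (g \<bullet> snd z - g \<bullet> fst z) / 2 + \<beta> * (lA z + cc) \<le> (cc / ll) * R + e / 3"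
      using stepB[OF real, of "e / 3"] e by auto
    obtain \<psi> where psi: "\<psi> \<in> F" and hC: "\<forall>z\<in>X \<times> X. GG \<beta> \<psi> z \<le> 2 * ((cc / ll) * R + e / 3) - 2 * \<beta> * cc + e / 3"
      using stepC[OF b hB, of "e / 3"] e by auto
    have "riskA P p F X A g \<epsilon> \<le> ereal ((2 * ((cc / ll) * R + e / 3) - 2 * \<beta> * cc + e / 3) / 2 + \<beta> * cc + e / 3)"
      using stepD[OF b psi hC, of "e / 3"] e by simp
    also have "\<dots> \<le> ereal ((cc / ll) * R) + ereal e"
    proof -
      have "(2 * ((cc / ll) * R + e / 3) - 2 * \<beta> * cc + e / 3) / 2 + \<beta> * cc + e / 3 \<le> (cc / ll) * R + e"
      proof -
        have "(2 * ((cc / ll) * R + e / 3) - 2 * \<beta> * cc + e / 3) / 2 + \<beta> * cc + e / 3 = (cc / ll) * R + 5 * e / 6"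
          by (simp add: field_simps)
        then show ?thesis using e by argo
      qed
      then show ?thesis by simp
    qed
    finally show ?thesis .
  qed
  then have "riskA P p F X A g \<epsilon> \<le> ereal ((cc / ll) * R)" by (rule ereal_le_epsilon2)
  then show ?thesis using real theta_eq by simp
next
  case PInf
  define th where "th = 2 * ln (2 / \<epsilon>) / ln (1 / (4 * \<epsilon>))"
  have "0 < th" unfolding th_def using theta_eq cc_pos ll_pos by simp
  then have "ereal th * risk_star P p X A g \<epsilon> = \<infinity>" using PInf by simp
  then have "ereal (2 * ln (2 / \<epsilon>) / ln (1 / (4 * \<epsilon>))) * risk_star P p X A g \<epsilon> = \<infinity>"
    unfolding th_def .
  then show ?thesis by (simp only:) simp
next
  case MInf
  then show ?thesis using rstar_nonneg by simp
qed

end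

theorem theorem3p1:
  fixes P :: "'a::polish_space measure"
    and M :: "'m::euclidean_space set"
    and p :: "'m \<Rightarrow> 'a \<Rightarrow> real"
    and F :: "('a \<Rightarrow> real) set"
    and X :: "'n::euclidean_space set"
    and A :: "'n \<Rightarrow> 'm"
    and g :: 'n
    and \<epsilon> :: real
  assumes "sets P = sets borel"
    and "sigma_finite_measure P"
    and "density_family P M p"
    and "fin_dim_fun_space P F"
    and "good_pair P M p F"
    and "X \<noteq> {}" and "convex X" and "compact X"
    and "\<exists>L b. linear L \<and> (\<forall>x. A x = L x + b)"
    and "A ` X \<subseteq> M"
    and "0 < \<epsilon>" and "\<epsilon> < 1/4"
  shows "riskA P p F X A g \<epsilon>
           \<le> ereal (2 * ln (2 / \<epsilon>) / ln (1 / (4 * \<epsilon>))) * risk_star P p X A g \<epsilon>"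
proof -
  obtain L b where Lb: "linear L" "\<And>x. A x = L x + b" using assms(9) by blast
  interpret S2: setting2 P M p F X A g \<epsilon> L b
    by unfold_locales (use assms(1-8,10-12) Lb in \<open>auto simp: linear_add linear_scale\<close>)
  show ?thesis by (rule S2.main)
qed

end
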